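(* A (connected) set Hopf monoid $(\mathbf{H},m,\Delta)$ is self-adjoint with respect to some poset structure if and only if it is commutative and cocommutative.
   Context: A (connected) set species $\mathbf{H}$ assigns to each finite set $I$ a finite set $\mathbf{H}[I]$, $\mathbf{H}[\emptyset]=\{1\}$, and to each bijection a bijection, functorially. A set Hopf monoid has maps $m_{S,T}:\mathbf{H}[S]\times\mathbf{H}[T]\to\mathbf{H}[S\sqcup T]$ (natural, associative, unital) and $\Delta_{S,T}:\mathbf{H}[S\sqcup T]\to\mathbf{H}[S]\times\mathbf{H}[T]$ (natural, coassociative, counital), satisfying compatibility: for $I=S_1\sqcup S_2=T_1\sqcup T_2$, $A=S_1\cap T_1$, $B=S_1\cap T_2$, $C=S_2\cap T_1$, $D=S_2\cap T_2$, if $\Delta_{A,B}(x)=(x_A,x_B)$, $\Delta_{C,D}(y)=(y_C,y_D)$ then $\Delta_{T_1,T_2}(m_{S_1,S_2}(x,y))=(m_{A,C}(x_A,y_C),m_{B,D}(x_B,y_D))$. Commutative: $m_{S,T}(x,y)=m_{T,S}(y,x)$; cocommutative: $\Delta_{S,T}(x)=(y,z)\iff\Delta_{T,S}(x)=(z,y)$. "Self-adjoint with respect to some poset structure" means there exist partial orders on the sets $\mathbf{H}[I]$ such that all relabelling bijections, all $m_{S,T}$ and all $\Delta_{S,T}$ are order-preserving (product orders on products), and for all $S,T$ the maps $m_{S,T}$ and $\Delta_{S,T}$ form a Galois connection (either $\Delta_{S,T}(x)\le(y,z)\iff x\le m_{S,T}(y,z)$ for all $x,y,z$, or $m_{S,T}(y,z)\le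 x\iff(y,z)\le\Delta_{S,T}(x)$ for all $x,y,z$). *)

theory Defs
  imports Main
begin

text \<open>H I is the finite set H[I] (for finite I); rl \<sigma> I is the relabelling H[\<sigma>] along the
  bijection from I onto \<sigma> ` I given by restricting \<sigma> to I (with inj_on \<sigma> I).\<close>

definition set_species :: "('l set \<Rightarrow> 'a set) \<Rightarrow> (('l \<Rightarrow> 'l) \<Rightarrow> 'l set \<Rightarrow> 'a \<Rightarrow> 'a) \<Rightarrow> 'a \<Rightarrow> bool" where
  "set_species H rl e \<longleftrightarrow>
     H {} = {e} \<and>
     (\<forall>I. finite I \<longrightarrow> finite (H I)) \<and>
     (\<forall>I \<sigma> x. finite I \<and> inj_on \<sigma> I \<and> x \<in> H I \<longrightarrow> rl \<sigma> I x \<in> H (\<sigma> ` I)) \<and>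
     (\<forall>I \<sigma> \<tau> x. finite I \<and> inj_on \<sigma> I \<and> (\<forall>i\<in>I. \<sigma> i = \<tau> i) \<and> x \<in> H I
          \<longrightarrow> rl \<sigma> I x = rl \<tau> I x) \<and>
     (\<forall>I x. finite I \<and> x \<in> H I \<longrightarrow> rl id I x = x) \<and>
     (\<forall>I \<sigma> \<tau> x. finite I \<and> inj_on \<sigma> I \<and> inj_on \<tau> (\<sigma> ` I) \<and> x \<in> H I
          \<longrightarrow> rl (\<tau> \<circ> \<sigma>) I x = rl \<tau> (\<sigma> ` I) (rl \<sigma> I x))"

definition set_monoid_ax ::
  "('l set \<Rightarrow> 'a set) \<Rightarrow> (('l \<Rightarrow> 'l) \<Rightarrow> 'l set \<Rightarrow> 'a \<Rightarrow> 'a) \<Rightarrow> 'a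
   \<Rightarrow> ('l set \<Rightarrow> 'l set \<Rightarrow> 'a \<Rightarrow> 'a \<Rightarrow> 'a) \<Rightarrow> bool" where
  "set_monoid_ax H rl e m \<longleftrightarrow>
     (\<forall>S T x y. finite S \<and> finite T \<and> S \<inter> T = {} \<and> x \<in> H S \<and> y \<in> H T
        \<longrightarrow> m S T x y \<in> H (S \<union> T)) \<and>
     (\<forall>S T \<sigma> x y. finite S \<and> finite T \<and> S \<inter> T = {} \<and> inj_on \<sigma> (S \<union> T) \<and> x \<in> H S \<and> y \<in> H T
        \<longrightarrow> rl \<sigma> (S \<union> T) (m S T x y) = m (\<sigma> ` S) (\<sigma> ` T) (rl \<sigma> S x) (rl \<sigma> T y)) \<and>
     (\<forall>R S T x y z. finite R \<and> finite S \<and> finite T \<and> R \<inter> S = {} \<and> R \<inter> T = {} \<and> S \<inter> T = {}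
        \<and> x \<in> H R \<and> y \<in> H S \<and> z \<in> H T
        \<longrightarrow> m (R \<union> S) T (m R S x y) z = m R (S \<union> T) x (m S T y z)) \<and>
     (\<forall>I x. finite I \<and> x \<in> H I \<longrightarrow> m {} I e x = x \<and> m I {} x e = x)"

definition set_comonoid_ax ::
  "('l set \<Rightarrow> 'a set) \<Rightarrow> (('l \<Rightarrow> 'l) \<Rightarrow> 'l set \<Rightarrow> 'a \<Rightarrow> 'a) \<Rightarrow> 'a
   \<Rightarrow> ('l set \<Rightarrow> 'l set \<Rightarrow> 'a \<Rightarrow> 'a \<times> 'a) \<Rightarrow> bool" where
  "set_comonoid_ax H rl e \<Delta> \<longleftrightarrow>
     (\<forall>S T x. finite S \<and> finite T \<and> S \<inter> T = {} \<and> x \<in> H (S \<union> T)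
        \<longrightarrow> \<Delta> S T x \<in> H S \<times> H T) \<and>
     (\<forall>S T \<sigma> x. finite S \<and> finite T \<and> S \<inter> T = {} \<and> inj_on \<sigma> (S \<union> T) \<and> x \<in> H (S \<union> T)
        \<longrightarrow> \<Delta> (\<sigma> ` S) (\<sigma> ` T) (rl \<sigma> (S \<union> T) x) = map_prod (rl \<sigma> S) (rl \<sigma> T) (\<Delta> S T x)) \<and>
     (\<forall>R S T x. finite R \<and> finite S \<and> finite T \<and> R \<inter> S = {} \<and> R \<inter> T = {} \<and> S \<inter> T = {}
        \<and> x \<in> H (R \<union> S \<union> T)
        \<longrightarrow> fst (\<Delta> R S (fst (\<Delta> (R \<union> S) T x))) = fst (\<Delta> R (S \<union> T) x)
          \<and> snd (\<Delta> R S (fst (\<Delta> (R \<union> S) T x))) = fst (\<Delta> S T (snd (\<Delta> R (S \<union> T) x)))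
          \<and> snd (\<Delta> (R \<union> S) T x) = snd (\<Delta> S T (snd (\<Delta> R (S \<union> T) x)))) \<and>
     (\<forall>I x. finite I \<and> x \<in> H I \<longrightarrow> \<Delta> {} I x = (e, x) \<and> \<Delta> I {} x = (x, e))"

definition hopf_compat ::
  "('l set \<Rightarrow> 'a set) \<Rightarrow> ('l set \<Rightarrow> 'l set \<Rightarrow> 'a \<Rightarrow> 'a \<Rightarrow> 'a)
   \<Rightarrow> ('l set \<Rightarrow> 'l set \<Rightarrow> 'a \<Rightarrow> 'a \<times> 'a) \<Rightarrow> bool" where
  "hopf_compat H m \<Delta> \<longleftrightarrow>
     (\<forall>S1 S2 T1 T2 x y. finite S1 \<and> finite S2 \<and> S1 \<inter> S2 = {} \<and> T1 \<inter> T2 = {}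
        \<and> S1 \<union> S2 = T1 \<union> T2 \<and> x \<in> H S1 \<and> y \<in> H S2
        \<longrightarrow> \<Delta> T1 T2 (m S1 S2 x y) =
             (m (S1 \<inter> T1) (S2 \<inter> T1) (fst (\<Delta> (S1 \<inter> T1) (S1 \<inter> T2) x)) (fst (\<Delta> (S2 \<inter> T1) (S2 \<inter> T2) y)),
              m (S1 \<inter> T2) (S2 \<inter> T2) (snd (\<Delta> (S1 \<inter> T1) (S1 \<inter> T2) x)) (snd (\<Delta> (S2 \<inter> T1) (S2 \<inter> T2) y))))"

text \<open>Connected set Hopf monoid (connectedness: H {} = {e}, included in set_species).\<close>
definition set_hopf_monoid ::
  "('l set \<Rightarrow> 'a set) \<Rightarrow> (('l \<Rightarrow> 'l) \<Rightarrow> 'l set \<Rightarrow> 'a \<Rightarrow> 'a) \<Rightarrow> 'a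
   \<Rightarrow> ('l set \<Rightarrow> 'l set \<Rightarrow> 'a \<Rightarrow> 'a \<Rightarrow> 'a) \<Rightarrow> ('l set \<Rightarrow> 'l set \<Rightarrow> 'a \<Rightarrow> 'a \<times> 'a) \<Rightarrow> bool" where
  "set_hopf_monoid H rl e m \<Delta> \<longleftrightarrow>
     set_species H rl e \<and> set_monoid_ax H rl e m \<and> set_comonoid_ax H rl e \<Delta> \<and> hopf_compat H m \<Delta>"

definition hopf_commutative ::
  "('l set \<Rightarrow> 'a set) \<Rightarrow> ('l set \<Rightarrow> 'l set \<Rightarrow> 'a \<Rightarrow> 'a \<Rightarrow> 'a) \<Rightarrow> bool" where
  "hopf_commutative H m \<longleftrightarrow>
     (\<forall>S T x y. finite S \<and> finite T \<and> S \<inter> T = {} \<and> x \<in> H S \<and> y \<in> H T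
        \<longrightarrow> m S T x y = m T S y x)"

definition hopf_cocommutative ::
  "('l set \<Rightarrow> 'a set) \<Rightarrow> ('l set \<Rightarrow> 'l set \<Rightarrow> 'a \<Rightarrow> 'a \<times> 'a) \<Rightarrow> bool" where
  "hopf_cocommutative H \<Delta> \<longleftrightarrow>
     (\<forall>S T x y z. finite S \<and> finite T \<and> S \<inter> T = {} \<and> x \<in> H (S \<union> T)
        \<longrightarrow> (\<Delta> S T x = (y, z) \<longleftrightarrow> \<Delta> T S x = (z, y)))"

definition poset_on :: "'a set \<Rightarrow> ('a \<Rightarrow> 'a \<Rightarrow> bool) \<Rightarrow> bool" where
  "poset_on P le \<longleftrightarrow>
     (\<forall>x\<in>P. le x x) \<and> (\<forall>x\<in>P. \<forall>y\<in>P. le x y \<and> le y x \<longrightarrow> x = y) \<and>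
     (\<forall>x\<in>P. \<forall>y\<in>P. \<forall>z\<in>P. le x y \<and> le y z \<longrightarrow> le x z)"

definition prod_le :: "('l set \<Rightarrow> 'a \<Rightarrow> 'a \<Rightarrow> bool) \<Rightarrow> 'l set \<Rightarrow> 'l set \<Rightarrow> 'a \<times> 'a \<Rightarrow> 'a \<times> 'a \<Rightarrow> bool" where
  "prod_le le S T p q \<longleftrightarrow> le S (fst p) (fst q) \<and> le T (snd p) (snd q)"

definition self_adjoint ::
  "('l set \<Rightarrow> 'a set) \<Rightarrow> (('l \<Rightarrow> 'l) \<Rightarrow> 'l set \<Rightarrow> 'a \<Rightarrow> 'a)
   \<Rightarrow> ('l set \<Rightarrow> 'l set \<Rightarrow> 'a \<Rightarrow> 'a \<Rightarrow> 'a) \<Rightarrow> ('l set \<Rightarrow> 'l set \<Rightarrow> 'a \<Rightarrow> 'a \<times> 'a) \<Rightarrow> bool" where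
  "self_adjoint H rl m \<Delta> \<longleftrightarrow>
    (\<exists>le :: 'l set \<Rightarrow> 'a \<Rightarrow> 'a \<Rightarrow> bool.
       (\<forall>I. finite I \<longrightarrow> poset_on (H I) (le I)) \<and>
       (\<forall>I \<sigma> x x'. finite I \<and> inj_on \<sigma> I \<and> x \<in> H I \<and> x' \<in> H I \<and> le I x x'
          \<longrightarrow> le (\<sigma> ` I) (rl \<sigma> I x) (rl \<sigma> I x')) \<and>
       (\<forall>S T x x' y y'. finite S \<and> finite T \<and> S \<inter> T = {} \<and> x \<in> H S \<and> x' \<in> H S \<and> y \<in> H T \<and> y' \<in> H T
          \<and> le S x x' \<and> le T y y' \<longrightarrow> le (S \<union> T) (m S T x y) (m S T x' y')) \<and>
       (\<forall>S T x x'. finite S \<and> finite T \<and> S \<inter> T = {} \<and> x \<in> H (S \<union> T) \<and> x' \<in> H (S \<union> T)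
          \<and> le (S \<union> T) x x' \<longrightarrow> prod_le le S T (\<Delta> S T x) (\<Delta> S T x')) \<and>
       (\<forall>S T. finite S \<and> finite T \<and> S \<inter> T = {} \<longrightarrow>
          (\<forall>x\<in>H (S \<union> T). \<forall>y\<in>H S. \<forall>z\<in>H T.
              prod_le le S T (\<Delta> S T x) (y, z) \<longleftrightarrow> le (S \<union> T) x (m S T y z))
        \<or> (\<forall>x\<in>H (S \<union> T). \<forall>y\<in>H S. \<forall>z\<in>H T.
              le (S \<union> T) (m S T y z) x \<longleftrightarrow> prod_le le S T (y, z) (\<Delta> S T x))))"

end

theory Submission
  imports Defs
begin


locale shm =
  fixes H :: "'l set \<Rightarrow> 'a set"
    and rl :: "('l \<Rightarrow> 'l) \<Rightarrow> 'l set \<Rightarrow> 'a \<Rightarrow> 'a"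
    and e :: 'a
    and m :: "'l set \<Rightarrow> 'l set \<Rightarrow> 'a \<Rightarrow> 'a \<Rightarrow> 'a"
    and \<Delta> :: "'l set \<Rightarrow> 'l set \<Rightarrow> 'a \<Rightarrow> 'a \<times> 'a"
  assumes hm: "set_hopf_monoid H rl e m \<Delta>"
begin

lemma sp: "set_species H rl e" and mo: "set_monoid_ax H rl e m"
  and co: "set_comonoid_ax H rl e \<Delta>" and hc: "hopf_compat H m \<Delta>"
  using hm unfolding set_hopf_monoid_def by auto

lemma spc: "H {} = {e} \<and>
     (\<forall>I. finite I \<longrightarrow> finite (H I)) \<and>
     (\<forall>I \<sigma> x. finite I \<and> inj_on \<sigma> I \<and> x \<in> H I \<longrightarrow> rl \<sigma> I x \<in> H (\<sigma> ` I)) \<and>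
     (\<forall>I \<sigma> \<tau> x. finite I \<and> inj_on \<sigma> I \<and> (\<forall>i\<in>I. \<sigma> i = \<tau> i) \<and> x \<in> H I
          \<longrightarrow> rl \<sigma> I x = rl \<tau> I x) \<and>
     (\<forall>I x. finite I \<and> x \<in> H I \<longrightarrow> rl id I x = x) \<and>
     (\<forall>I \<sigma> \<tau> x. finite I \<and> inj_on \<sigma> I \<and> inj_on \<tau> (\<sigma> ` I) \<and> x \<in> H I
          \<longrightarrow> rl (\<tau> \<circ> \<sigma>) I x = rl \<tau> (\<sigma> ` I) (rl \<sigma> I x))"
  using sp unfolding set_species_def .

lemma H_empty: "H {} = {e}" using spc by (elim conjE)

lemma rl_closed: "finite I \<Longrightarrow> inj_on \<sigma> I \<Longrightarrow> x \<in> H I \<Longrightarrow> J = \<sigma> ` I \<Longrightarrow> rl \<sigma> I x \<in> H J"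
  using spc[THEN conjunct2, THEN conjunct2, THEN conjunct1, rule_format, of I \<sigma> x] by simp

lemma rl_cong: "finite I \<Longrightarrow> inj_on \<sigma> I \<Longrightarrow> (\<forall>i\<in>I. \<sigma> i = \<tau> i) \<Longrightarrow> x \<in> H I \<Longrightarrow> rl \<sigma> I x = rl \<tau> I x"
  using spc[THEN conjunct2, THEN conjunct2, THEN conjunct2, THEN conjunct1, rule_format, of I \<sigma> \<tau> x] by simp

lemma rl_id: "finite I \<Longrightarrow> x \<in> H I \<Longrightarrow> rl id I x = x"
  using spc[THEN conjunct2, THEN conjunct2, THEN conjunct2, THEN conjunct2, THEN conjunct1, rule_format, of I x] by simp

lemma rl_comp: "finite I \<Longrightarrow> inj_on \<sigma> I \<Longrightarrow> inj_on \<tau> (\<sigma> ` I) \<Longrightarrow> x \<in> H I \<Longrightarrow>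
   rl (\<tau> \<circ> \<sigma>) I x = rl \<tau> (\<sigma> ` I) (rl \<sigma> I x)"
  using spc[THEN conjunct2, THEN conjunct2, THEN conjunct2, THEN conjunct2, THEN conjunct2, rule_format, of I \<sigma> \<tau> x] by simp

lemma moc: "(\<forall>S T x y. finite S \<and> finite T \<and> S \<inter> T = {} \<and> x \<in> H S \<and> y \<in> H T
        \<longrightarrow> m S T x y \<in> H (S \<union> T)) \<and>
     (\<forall>S T \<sigma> x y. finite S \<and> finite T \<and> S \<inter> T = {} \<and> inj_on \<sigma> (S \<union> T) \<and> x \<in> H S \<and> y \<in> H T
        \<longrightarrow> rl \<sigma> (S \<union> T) (m S T x y) = m (\<sigma> ` S) (\<sigma> ` T) (rl \<sigma> S x) (rl \<sigma> T y)) \<and>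
     (\<forall>R S T x y z. finite R \<and> finite S \<and> finite T \<and> R \<inter> S = {} \<and> R \<inter> T = {} \<and> S \<inter> T = {}
        \<and> x \<in> H R \<and> y \<in> H S \<and> z \<in> H T
        \<longrightarrow> m (R \<union> S) T (m R S x y) z = m R (S \<union> T) x (m S T y z)) \<and>
     (\<forall>I x. finite I \<and> x \<in> H I \<longrightarrow> m {} I e x = x \<and> m I {} x e = x)"
  using mo unfolding set_monoid_ax_def .

lemma m_closed: "finite S \<Longrightarrow> finite T \<Longrightarrow> S \<inter> T = {} \<Longrightarrow> x \<in> H S \<Longrightarrow> y \<in> H T \<Longrightarrow> U = S \<union> T
  \<Longrightarrow> m S T x y \<in> H U"
  using moc[THEN conjunct1, rule_format, of S T x y] by simp

lemma m_nat: "finite S \<Longrightarrow> finite T \<Longrightarrow> S \<inter> T = {} \<Longrightarrow> inj_on \<sigma> U \<Longrightarrow> U = S \<union> T \<Longrightarrow> x \<in> H S \<Longrightarrow> y \<in> H T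
  \<Longrightarrow> rl \<sigma> U (m S T x y) = m (\<sigma> ` S) (\<sigma> ` T) (rl \<sigma> S x) (rl \<sigma> T y)"
  using moc[THEN conjunct2, THEN conjunct1, rule_format, of S T \<sigma> x y] by simp

lemma m_assoc: "finite R \<Longrightarrow> finite S \<Longrightarrow> finite T \<Longrightarrow> R \<inter> S = {} \<Longrightarrow> R \<inter> T = {} \<Longrightarrow> S \<inter> T = {}
  \<Longrightarrow> x \<in> H R \<Longrightarrow> y \<in> H S \<Longrightarrow> z \<in> H T \<Longrightarrow> RS = R \<union> S \<Longrightarrow> ST = S \<union> T
  \<Longrightarrow> m RS T (m R S x y) z = m R ST x (m S T y z)"
  using moc[THEN conjunct2, THEN conjunct2, THEN conjunct1, rule_format, of R S T x y z] by simp

lemma m_unitL: "finite I \<Longrightarrow> x \<in> H I \<Longrightarrow> m {} I e x = x"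
  using moc[THEN conjunct2, THEN conjunct2, THEN conjunct2, rule_format, of I x] by simp
lemma m_unitR: "finite I \<Longrightarrow> x \<in> H I \<Longrightarrow> m I {} x e = x"
  using moc[THEN conjunct2, THEN conjunct2, THEN conjunct2, rule_format, of I x] by simp

lemma coc: "(\<forall>S T x. finite S \<and> finite T \<and> S \<inter> T = {} \<and> x \<in> H (S \<union> T)
        \<longrightarrow> \<Delta> S T x \<in> H S \<times> H T) \<and>
     (\<forall>S T \<sigma> x. finite S \<and> finite T \<and> S \<inter> T = {} \<and> inj_on \<sigma> (S \<union> T) \<and> x \<in> H (S \<union> T)
        \<longrightarrow> \<Delta> (\<sigma> ` S) (\<sigma> ` T) (rl \<sigma> (S \<union> T) x) = map_prod (rl \<sigma> S) (rl \<sigma> T) (\<Delta> S T x)) \<and>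
     (\<forall>R S T x. finite R \<and> finite S \<and> finite T \<and> R \<inter> S = {} \<and> R \<inter> T = {} \<and> S \<inter> T = {}
        \<and> x \<in> H (R \<union> S \<union> T)
        \<longrightarrow> fst (\<Delta> R S (fst (\<Delta> (R \<union> S) T x))) = fst (\<Delta> R (S \<union> T) x)
          \<and> snd (\<Delta> R S (fst (\<Delta> (R \<union> S) T x))) = fst (\<Delta> S T (snd (\<Delta> R (S \<union> T) x)))
          \<and> snd (\<Delta> (R \<union> S) T x) = snd (\<Delta> S T (snd (\<Delta> R (S \<union> T) x)))) \<and>
     (\<forall>I x. finite I \<and> x \<in> H I \<longrightarrow> \<Delta> {} I x = (e, x) \<and> \<Delta> I {} x = (x, e))"
  using co unfolding set_comonoid_ax_def .

lemma D_closed: "finite S \<Longrightarrow> finite T \<Longrightarrow> S \<inter> T = {} \<Longrightarrow> x \<in> H U \<Longrightarrow> U = S \<union> T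
  \<Longrightarrow> fst (\<Delta> S T x) \<in> H S \<and> snd (\<Delta> S T x) \<in> H T"
  using coc[THEN conjunct1, rule_format, of S T x] by (simp add: mem_Times_iff)

lemma D_nat: "finite S \<Longrightarrow> finite T \<Longrightarrow> S \<inter> T = {} \<Longrightarrow> inj_on \<sigma> U \<Longrightarrow> U = S \<union> T \<Longrightarrow> x \<in> H U
  \<Longrightarrow> \<Delta> (\<sigma> ` S) (\<sigma> ` T) (rl \<sigma> U x) = map_prod (rl \<sigma> S) (rl \<sigma> T) (\<Delta> S T x)"
  using coc[THEN conjunct2, THEN conjunct1, rule_format, of S T \<sigma> x] by simp

lemma D_coassoc1: "finite R \<Longrightarrow> finite S \<Longrightarrow> finite T \<Longrightarrow> R \<inter> S = {} \<Longrightarrow> R \<inter> T = {} \<Longrightarrow> S \<inter> T = {}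
  \<Longrightarrow> x \<in> H I \<Longrightarrow> I = R \<union> S \<union> T \<Longrightarrow> RS = R \<union> S \<Longrightarrow> ST = S \<union> T
  \<Longrightarrow> fst (\<Delta> R S (fst (\<Delta> RS T x))) = fst (\<Delta> R ST x)"
  using coc[THEN conjunct2, THEN conjunct2, THEN conjunct1, rule_format, of R S T x] by simp

lemma D_counitL: "finite I \<Longrightarrow> x \<in> H I \<Longrightarrow> \<Delta> {} I x = (e, x)"
  using coc[THEN conjunct2, THEN conjunct2, THEN conjunct2, rule_format, of I x] by simp
lemma D_counitR: "finite I \<Longrightarrow> x \<in> H I \<Longrightarrow> \<Delta> I {} x = (x, e)"
  using coc[THEN conjunct2, THEN conjunct2, THEN conjunct2, rule_format, of I x] by simp

lemma compat: "finite S1 \<Longrightarrow> finite S2 \<Longrightarrow> S1 \<inter> S2 = {} \<Longrightarrow> T1 \<inter> T2 = {} \<Longrightarrow> S1 \<union> S2 = T1 \<union> T2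
  \<Longrightarrow> x \<in> H S1 \<Longrightarrow> y \<in> H S2 \<Longrightarrow> A = S1 \<inter> T1 \<Longrightarrow> B = S1 \<inter> T2 \<Longrightarrow> C = S2 \<inter> T1 \<Longrightarrow> D = S2 \<inter> T2
  \<Longrightarrow> \<Delta> T1 T2 (m S1 S2 x y) = (m A C (fst (\<Delta> A B x)) (fst (\<Delta> C D y)), m B D (snd (\<Delta> A B x)) (snd (\<Delta> C D y)))"
  using hc[unfolded hopf_compat_def, rule_format, of S1 S2 T1 T2 x y] by simp

lemma Dm: "finite S \<Longrightarrow> finite T \<Longrightarrow> S \<inter> T = {} \<Longrightarrow> y \<in> H S \<Longrightarrow> z \<in> H T \<Longrightarrow> \<Delta> S T (m S T y z) = (y, z)"
proof -
  assume a: "finite S" "finite T" "S \<inter> T = {}" "y \<in> H S" "z \<in> H T"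
  have "\<Delta> S T (m S T y z) = (m S {} (fst (\<Delta> S {} y)) (fst (\<Delta> {} T z)), m {} T (snd (\<Delta> S {} y)) (snd (\<Delta> {} T z)))"
    by (rule compat) (use a in auto)
  also have "\<dots> = (y, z)" using a by (simp add: D_counitL D_counitR m_unitL m_unitR)
  finally show ?thesis .
qed

lemma Dm_swap: "finite S \<Longrightarrow> finite T \<Longrightarrow> S \<inter> T = {} \<Longrightarrow> y \<in> H S \<Longrightarrow> z \<in> H T \<Longrightarrow> \<Delta> S T (m T S z y) = (y, z)"
proof -
  assume a: "finite S" "finite T" "S \<inter> T = {}" "y \<in> H S" "z \<in> H T"
  have "\<Delta> S T (m T S z y) = (m {} S (fst (\<Delta> {} T z)) (fst (\<Delta> S {} y)), m T {} (snd (\<Delta> {} T z)) (snd (\<Delta> S {} y)))"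
    by (rule compat) (use a in auto)
  also have "\<dots> = (y, z)" using a by (simp add: D_counitL D_counitR m_unitL m_unitR)
  finally show ?thesis .
qed

end

lemma fresh_copy:
  assumes "infinite (UNIV::'l set)" "finite F" "finite T"
  shows "\<exists>\<tau>::'l\<Rightarrow>'l. inj_on \<tau> T \<and> \<tau> ` T \<inter> F = {}"
proof -
  have "infinite (UNIV - F)" using assms by (simp add: Diff_infinite_finite)
  then obtain B where B: "B \<subseteq> UNIV - F" "finite B" "card B = card T"
    using infinite_arbitrarily_large by blast
  then obtain \<tau> where "bij_betw \<tau> T B" using finite_same_card_bij assms(3) by metis
  then show ?thesis using B by (auto simp: bij_betw_def)
qed

lemma swap_inv:
  assumes "finite S" "finite T" "S \<inter> T = {}" "card S = card T"
  shows "\<exists>\<sigma>::'l\<Rightarrow>'l. inj_on \<sigma> (S \<union> T) \<and> \<sigma> ` S = T \<and> \<sigma> ` T = S \<and> (\<forall>i\<in>S \<union> T. \<sigma> (\<sigma> i) = i)"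
proof -
  obtain f where f: "bij_betw f S T" using finite_same_card_bij assms by metis
  define g where "g = inv_into S f"
  have g: "bij_betw g T S" using f g_def bij_betw_inv_into by blast
  define \<sigma> where "\<sigma> i = (if i \<in> S then f i else g i)" for i
  have inv: "\<forall>i\<in>S \<union> T. \<sigma> (\<sigma> i) = i"
  proof
    fix i assume i: "i \<in> S \<union> T"
    show "\<sigma> (\<sigma> i) = i"
    proof (cases "i \<in> S")
      case True
      then have "f i \<in> T" using f by (auto simp: bij_betw_def)
      then have "f i \<notin> S" using assms(3) by auto
      then show ?thesis using True f by (simp add: \<sigma>_def g_def bij_betw_def)
    next
      case False
      then have iT: "i \<in> T" using i by auto
      then have "g i \<in> S" using g by (auto simp: bij_betw_def)
      moreover have "f (g i) = i" using iT f unfolding g_def bij_betw_def by (simp add: f_inv_into_f)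
      ultimately show ?thesis using False by (simp add: \<sigma>_def)
    qed
  qed
  have "\<sigma> ` S = f ` S" by (auto simp: \<sigma>_def)
  then have s1: "\<sigma> ` S = T" using f by (simp add: bij_betw_def)
  have "\<sigma> ` T = g ` T" using assms(3) by (force simp: \<sigma>_def)
  then have s2: "\<sigma> ` T = S" using g by (simp add: bij_betw_def)
  have "inj_on \<sigma> (S \<union> T)"
  proof (rule inj_onI)
    fix x y assume "x \<in> S \<union> T" "y \<in> S \<union> T" "\<sigma> x = \<sigma> y"
    then show "x = y" using inv by metis
  qed
  then show ?thesis using s1 s2 inv by blast
qed

locale shm_le = shm H rl e m \<Delta>
  for H :: "'l set \<Rightarrow> 'a set"
    and rl :: "('l \<Rightarrow> 'l) \<Rightarrow> 'l set \<Rightarrow> 'a \<Rightarrow> 'a"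
    and e :: 'a
    and m :: "'l set \<Rightarrow> 'l set \<Rightarrow> 'a \<Rightarrow> 'a \<Rightarrow> 'a"
    and \<Delta> :: "'l set \<Rightarrow> 'l set \<Rightarrow> 'a \<Rightarrow> 'a \<times> 'a" +
  fixes le :: "'l set \<Rightarrow> 'a \<Rightarrow> 'a \<Rightarrow> bool"
  assumes po: "\<And>I. finite I \<Longrightarrow> poset_on (H I) (le I)"
    and rlmono: "\<And>I \<sigma> x x'. finite I \<Longrightarrow> inj_on \<sigma> I \<Longrightarrow> x \<in> H I \<Longrightarrow> x' \<in> H I \<Longrightarrow> le I x x'
          \<Longrightarrow> le (\<sigma> ` I) (rl \<sigma> I x) (rl \<sigma> I x')"
    and Dmono: "\<And>S T x x'. finite S \<Longrightarrow> finite T \<Longrightarrow> S \<inter> T = {} \<Longrightarrow> x \<in> H (S \<union> T) \<Longrightarrow> x' \<in> H (S \<union> T)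
          \<Longrightarrow> le (S \<union> T) x x' \<Longrightarrow> prod_le le S T (\<Delta> S T x) (\<Delta> S T x')"
    and gal: "\<And>S T. finite S \<Longrightarrow> finite T \<Longrightarrow> S \<inter> T = {} \<Longrightarrow>
          (\<forall>x\<in>H (S \<union> T). \<forall>y\<in>H S. \<forall>z\<in>H T.
              prod_le le S T (\<Delta> S T x) (y, z) \<longleftrightarrow> le (S \<union> T) x (m S T y z))
        \<or> (\<forall>x\<in>H (S \<union> T). \<forall>y\<in>H S. \<forall>z\<in>H T.
              le (S \<union> T) (m S T y z) x \<longleftrightarrow> prod_le le S T (y, z) (\<Delta> S T x))"
begin

lemma le_refl: "finite I \<Longrightarrow> x \<in> H I \<Longrightarrow> le I x x"
  using po unfolding poset_on_def by blast

lemma le_antisym: "finite I \<Longrightarrow> x \<in> H I \<Longrightarrow> y \<in> H I \<Longrightarrow> le I x y \<Longrightarrow> le I y x \<Longrightarrow> x = y"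
  using po unfolding poset_on_def by blast

lemma comm_dir:
  assumes "finite S" "finite T" "S \<inter> T = {}"
  shows "(\<forall>y\<in>H S. \<forall>z\<in>H T. le (S \<union> T) (m T S z y) (m S T y z)) \<or>
         (\<forall>y\<in>H S. \<forall>z\<in>H T. le (S \<union> T) (m S T y z) (m T S z y))"
proof -
  have b: "m T S z y \<in> H (S \<union> T)" and d: "\<Delta> S T (m T S z y) = (y, z)"
    and pr: "prod_le le S T (y, z) (y, z)"
    if "y \<in> H S" "z \<in> H T" for y z
    using that assms by (auto intro!: m_closed Dm_swap simp: prod_le_def le_refl)
  from gal[OF assms] show ?thesis
  proof
    assume g: "\<forall>x\<in>H (S \<union> T). \<forall>y\<in>H S. \<forall>z\<in>H T.
              prod_le le S T (\<Delta> S T x) (y, z) \<longleftrightarrow> le (S \<union> T) x (m S T y z)"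
    show ?thesis
      apply (rule disjI1) using g b d pr by metis
  next
    assume g: "\<forall>x\<in>H (S \<union> T). \<forall>y\<in>H S. \<forall>z\<in>H T.
              le (S \<union> T) (m S T y z) x \<longleftrightarrow> prod_le le S T (y, z) (\<Delta> S T x)"
    show ?thesis
      apply (rule disjI2) using g b d pr by metis
  qed
qed

lemma cocomm_dir:
  assumes "finite S" "finite T" "S \<inter> T = {}"
  shows "(\<forall>x\<in>H (S \<union> T). le T (fst (\<Delta> T S x)) (snd (\<Delta> S T x)) \<and> le S (snd (\<Delta> T S x)) (fst (\<Delta> S T x))) \<or>
         (\<forall>x\<in>H (S \<union> T). le T (snd (\<Delta> S T x)) (fst (\<Delta> T S x)) \<and> le S (fst (\<Delta> S T x)) (snd (\<Delta> T S x)))"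
proof -
  have TS: "T \<union> S = S \<union> T" by auto
  have yz: "fst (\<Delta> S T x) \<in> H S" "snd (\<Delta> S T x) \<in> H T" if "x \<in> H (S \<union> T)" for x
    using D_closed[OF assms that] by auto
  have mx: "m S T (fst (\<Delta> S T x)) (snd (\<Delta> S T x)) \<in> H (S \<union> T)" if "x \<in> H (S \<union> T)" for x
    using yz[OF that] assms by (auto intro!: m_closed)
  have dd: "\<Delta> T S (m S T (fst (\<Delta> S T x)) (snd (\<Delta> S T x))) = (snd (\<Delta> S T x), fst (\<Delta> S T x))"
    if "x \<in> H (S \<union> T)" for x
    using yz[OF that] assms by (auto intro!: Dm_swap)
  have pr: "prod_le le S T (\<Delta> S T x) (fst (\<Delta> S T x), snd (\<Delta> S T x))" if "x \<in> H (S \<union> T)" for x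
    using yz[OF that] assms by (auto simp: prod_le_def le_refl)
  have DmTS: "prod_le le T S (\<Delta> T S x) (\<Delta> T S x')" if "x \<in> H (S \<union> T)" "x' \<in> H (S \<union> T)" "le (S \<union> T) x x'" for x x'
    using Dmono[of T S x x'] that assms TS by auto
  from gal[OF assms] show ?thesis
  proof
    assume g: "\<forall>x\<in>H (S \<union> T). \<forall>y\<in>H S. \<forall>z\<in>H T.
              prod_le le S T (\<Delta> S T x) (y, z) \<longleftrightarrow> le (S \<union> T) x (m S T y z)"
    show ?thesis
    proof (rule disjI1, intro ballI)
      fix x assume x: "x \<in> H (S \<union> T)"
      have "le (S \<union> T) x (m S T (fst (\<Delta> S T x)) (snd (\<Delta> S T x)))"
        using g x yz[OF x] pr[OF x] by blast
      from DmTS[OF x mx[OF x] this] show "le T (fst (\<Delta> T S x)) (snd (\<Delta> S T x)) \<and> le S (snd (\<Delta> T S x)) (fst (\<Delta> S T x))"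
        using dd[OF x] by (simp add: prod_le_def)
    qed
  next
    assume g: "\<forall>x\<in>H (S \<union> T). \<forall>y\<in>H S. \<forall>z\<in>H T.
              le (S \<union> T) (m S T y z) x \<longleftrightarrow> prod_le le S T (y, z) (\<Delta> S T x)"
    show ?thesis
    proof (rule disjI2, intro ballI)
      fix x assume x: "x \<in> H (S \<union> T)"
      have "prod_le le S T (fst (\<Delta> S T x), snd (\<Delta> S T x)) (\<Delta> S T x)"
        using yz[OF x] assms by (auto simp: prod_le_def le_refl)
      then have "le (S \<union> T) (m S T (fst (\<Delta> S T x)) (snd (\<Delta> S T x))) x"
        using g x yz[OF x] by blast
      from DmTS[OF mx[OF x] x this] show "le T (snd (\<Delta> S T x)) (fst (\<Delta> T S x)) \<and> le S (fst (\<Delta> S T x)) (snd (\<Delta> T S x))"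
        using dd[OF x] by (simp add: prod_le_def)
    qed
  qed
qed


lemma inv_cancel:
  assumes "finite S" "finite T" "inj_on \<sigma> (S \<union> T)" "\<sigma> ` S = T" "\<forall>i\<in>S \<union> T. \<sigma> (\<sigma> i) = i" "w \<in> H S"
  shows "rl \<sigma> T (rl \<sigma> S w) = w"
proof -
  have iS: "inj_on \<sigma> S" "inj_on \<sigma> T" using assms(3) by (auto intro: inj_on_subset)
  have "rl (\<sigma> \<circ> \<sigma>) S w = rl \<sigma> (\<sigma> ` S) (rl \<sigma> S w)"
    using rl_comp[OF assms(1) iS(1)] iS(2) assms(4,6) by simp
  moreover have "rl id S w = rl (\<sigma> \<circ> \<sigma>) S w"
    using rl_cong[of S id "\<sigma> \<circ> \<sigma>" w] assms by auto
  ultimately show ?thesis using rl_id[OF assms(1,6)] assms(4) by simp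
qed

lemma comm_eq:
  assumes fin: "finite S" "finite T" and dj: "S \<inter> T = {}" and c: "card S = card T"
    and y: "y \<in> H S" and z: "z \<in> H T"
  shows "m S T y z = m T S z y"
proof -
  obtain \<sigma> where s: "inj_on \<sigma> (S \<union> T)" "\<sigma> ` S = T" "\<sigma> ` T = S" and inv: "\<forall>i\<in>S \<union> T. \<sigma> (\<sigma> i) = i"
    using swap_inv[OF fin dj c] by blast
  have inv2: "\<forall>i\<in>T \<union> S. \<sigma> (\<sigma> i) = i" "inj_on \<sigma> (T \<union> S)" using inv s(1) by (auto simp: Un_commute)
  have iS: "inj_on \<sigma> S" "inj_on \<sigma> T" using s(1) by (auto intro: inj_on_subset)
  have img: "\<sigma> ` (S \<union> T) = S \<union> T" using s by (auto simp: image_Un)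
  have cS: "rl \<sigma> T (rl \<sigma> S w) = w" if "w \<in> H S" for w
    using inv_cancel[OF fin s(1) s(2) inv that] .
  have cT: "rl \<sigma> S (rl \<sigma> T w) = w" if "w \<in> H T" for w
    using inv_cancel[OF fin(2) fin(1) inv2(2) s(3) inv2(1) that] .
  have rS: "rl \<sigma> S w \<in> H T" if "w \<in> H S" for w using rl_closed[OF fin(1) iS(1) that] s(2) by simp
  have rT: "rl \<sigma> T w \<in> H S" if "w \<in> H T" for w using rl_closed[OF fin(2) iS(2) that] s(3) by simp
  have dj2: "T \<inter> S = {}" using dj by auto
  have n1: "rl \<sigma> (S \<union> T) (m S T u v) = m T S (rl \<sigma> S u) (rl \<sigma> T v)" if "u \<in> H S" "v \<in> H T" for u v
    using m_nat[OF fin dj s(1) refl that] s by simp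
  have n2: "rl \<sigma> (S \<union> T) (m T S v u) = m S T (rl \<sigma> T v) (rl \<sigma> S u)" if "u \<in> H S" "v \<in> H T" for u v
    using m_nat[OF fin(2) fin(1) dj2 s(1) _ that(2) that(1)] s by (simp add: Un_commute)
  have mem1: "m S T u v \<in> H (S \<union> T)" if "u \<in> H S" "v \<in> H T" for u v
    using m_closed[OF fin dj that refl] .
  have mem2: "m T S v u \<in> H (S \<union> T)" if "u \<in> H S" "v \<in> H T" for u v
    using m_closed[OF fin(2) fin(1) dj2 that(2) that(1)] by (simp add: Un_commute)
  define u where "u = rl \<sigma> T z"
  define v where "v = rl \<sigma> S y"
  have u: "u \<in> H S" and v: "v \<in> H T" using rS rT y z u_def v_def by auto
  have ru: "rl \<sigma> S u = z" and rv: "rl \<sigma> T v = y" using cS cT y z u_def v_def by auto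
  have tr: "le (S \<union> T) (rl \<sigma> (S \<union> T) a) (rl \<sigma> (S \<union> T) b)" if "a \<in> H (S \<union> T)" "b \<in> H (S \<union> T)" "le (S \<union> T) a b" for a b
    using rlmono[OF _ s(1) that] fin img by simp
  from comm_dir[OF fin dj] show ?thesis
  proof
    assume d: "\<forall>y\<in>H S. \<forall>z\<in>H T. le (S \<union> T) (m T S z y) (m S T y z)"
    have "le (S \<union> T) (m T S v u) (m S T u v)" using d u v by blast
    from tr[OF mem2[OF u v] mem1[OF u v] this] have "le (S \<union> T) (m S T y z) (m T S z y)"
      using n1[OF u v] n2[OF u v] ru rv by simp
    moreover have "le (S \<union> T) (m T S z y) (m S T y z)" using d y z by blast
    ultimately show ?thesis using le_antisym[OF _ mem1[OF y z] mem2[OF y z]] fin by simp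
  next
    assume d: "\<forall>y\<in>H S. \<forall>z\<in>H T. le (S \<union> T) (m S T y z) (m T S z y)"
    have "le (S \<union> T) (m S T u v) (m T S v u)" using d u v by blast
    from tr[OF mem1[OF u v] mem2[OF u v] this] have "le (S \<union> T) (m T S z y) (m S T y z)"
      using n1[OF u v] n2[OF u v] ru rv by simp
    moreover have "le (S \<union> T) (m S T y z) (m T S z y)" using d y z by blast
    ultimately show ?thesis using le_antisym[OF _ mem1[OF y z] mem2[OF y z]] fin by simp
  qed
qed

lemma cocomm_eq:
  assumes fin: "finite S" "finite T" and dj: "S \<inter> T = {}" and c: "card S = card T"
    and x: "x \<in> H (S \<union> T)"
  shows "\<Delta> T S x = (snd (\<Delta> S T x), fst (\<Delta> S T x))"
proof -
  obtain \<sigma> where s: "inj_on \<sigma> (S \<union> T)" "\<sigma> ` S = T" "\<sigma> ` T = S" and inv: "\<forall>i\<in>S \<union> T. \<sigma> (\<sigma> i) = i"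
    using swap_inv[OF fin dj c] by blast
  have inv2: "\<forall>i\<in>T \<union> S. \<sigma> (\<sigma> i) = i" "inj_on \<sigma> (T \<union> S)" using inv s(1) by (auto simp: Un_commute)
  have iS: "inj_on \<sigma> S" "inj_on \<sigma> T" using s(1) by (auto intro: inj_on_subset)
  have img: "\<sigma> ` (S \<union> T) = S \<union> T" using s by (auto simp: image_Un)
  have cS: "rl \<sigma> T (rl \<sigma> S w) = w" if "w \<in> H S" for w
    using inv_cancel[OF fin s(1) s(2) inv that] .
  have cT: "rl \<sigma> S (rl \<sigma> T w) = w" if "w \<in> H T" for w
    using inv_cancel[OF fin(2) fin(1) inv2(2) s(3) inv2(1) that] .
  have rS: "rl \<sigma> S w \<in> H T" if "w \<in> H S" for w using rl_closed[OF fin(1) iS(1) that] s(2) by simp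
  have rT: "rl \<sigma> T w \<in> H S" if "w \<in> H T" for w using rl_closed[OF fin(2) iS(2) that] s(3) by simp
  have dj2: "T \<inter> S = {}" using dj by auto
  have TS: "T \<union> S = S \<union> T" by auto
  have xTS: "x \<in> H (T \<union> S)" using x TS by simp
  have mS: "le S a b \<Longrightarrow> a \<in> H S \<Longrightarrow> b \<in> H S \<Longrightarrow> le T (rl \<sigma> S a) (rl \<sigma> S b)" for a b
    using rlmono[OF fin(1) iS(1)] s(2) by metis
  have mT: "le T a b \<Longrightarrow> a \<in> H T \<Longrightarrow> b \<in> H T \<Longrightarrow> le S (rl \<sigma> T a) (rl \<sigma> T b)" for a b
    using rlmono[OF fin(2) iS(2)] s(3) by metis
  have memD: "fst (\<Delta> S T w) \<in> H S" "snd (\<Delta> S T w) \<in> H T" "fst (\<Delta> T S w) \<in> H T" "snd (\<Delta> T S w) \<in> H S"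
    if "w \<in> H (S \<union> T)" for w
    using D_closed[OF fin dj that refl] D_closed[OF fin(2) fin(1) dj2 that TS[symmetric]] by auto
  have rx: "rl \<sigma> (S \<union> T) w \<in> H (S \<union> T)" if "w \<in> H (S \<union> T)" for w
    using rl_closed[OF _ s(1) that img[symmetric]] fin by simp
  have n1: "\<Delta> T S (rl \<sigma> (S \<union> T) w) = map_prod (rl \<sigma> S) (rl \<sigma> T) (\<Delta> S T w)" if "w \<in> H (S \<union> T)" for w
    using D_nat[OF fin dj s(1) refl that] s by simp
  have n2: "\<Delta> S T (rl \<sigma> (S \<union> T) w) = map_prod (rl \<sigma> T) (rl \<sigma> S) (\<Delta> T S w)" if "w \<in> H (S \<union> T)" for w
    using D_nat[OF fin(2) fin(1) dj2 s(1) TS[symmetric] that] s by simp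
  define Q1 where "Q1 w \<longleftrightarrow> le T (fst (\<Delta> T S w)) (snd (\<Delta> S T w)) \<and> le S (snd (\<Delta> T S w)) (fst (\<Delta> S T w))" for w
  define Q2 where "Q2 w \<longleftrightarrow> le T (snd (\<Delta> S T w)) (fst (\<Delta> T S w)) \<and> le S (fst (\<Delta> S T w)) (snd (\<Delta> T S w))" for w
  have q12: "Q2 w" if "Q1 (rl \<sigma> (S \<union> T) w)" "w \<in> H (S \<union> T)" for w
  proof -
    have a: "le T (rl \<sigma> S (fst (\<Delta> S T w))) (rl \<sigma> S (snd (\<Delta> T S w)))"
      and b: "le S (rl \<sigma> T (snd (\<Delta> S T w))) (rl \<sigma> T (fst (\<Delta> T S w)))"
      using that(1) n1[OF that(2)] n2[OF that(2)] unfolding Q1_def by (simp_all add: map_prod_def split_beta)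
    have "le S (fst (\<Delta> S T w)) (snd (\<Delta> T S w))"
      using mT[OF a rS rS] memD[OF that(2)] cS by simp
    moreover have "le T (snd (\<Delta> S T w)) (fst (\<Delta> T S w))"
      using mS[OF b rT rT] memD[OF that(2)] cT by simp
    ultimately show ?thesis unfolding Q2_def by simp
  qed
  have q21: "Q1 w" if "Q2 (rl \<sigma> (S \<union> T) w)" "w \<in> H (S \<union> T)" for w
  proof -
    have a: "le T (rl \<sigma> S (snd (\<Delta> T S w))) (rl \<sigma> S (fst (\<Delta> S T w)))"
      and b: "le S (rl \<sigma> T (fst (\<Delta> T S w))) (rl \<sigma> T (snd (\<Delta> S T w)))"
      using that(1) n1[OF that(2)] n2[OF that(2)] unfolding Q2_def by (simp_all add: map_prod_def split_beta)
    have "le S (snd (\<Delta> T S w)) (fst (\<Delta> S T w))"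
      using mT[OF a rS rS] memD[OF that(2)] cS by simp
    moreover have "le T (fst (\<Delta> T S w)) (snd (\<Delta> S T w))"
      using mS[OF b rT rT] memD[OF that(2)] cT by simp
    ultimately show ?thesis unfolding Q1_def by simp
  qed
  have both: "Q1 x \<and> Q2 x"
  proof -
    from cocomm_dir[OF fin dj] have "(\<forall>w\<in>H (S \<union> T). Q1 w) \<or> (\<forall>w\<in>H (S \<union> T). Q2 w)"
      unfolding Q1_def Q2_def .
    then show ?thesis using q12 q21 rx x by blast
  qed
  have "fst (\<Delta> T S x) = snd (\<Delta> S T x)" "snd (\<Delta> T S x) = fst (\<Delta> S T x)"
    using both memD[OF x] fin unfolding Q1_def Q2_def by (auto intro: le_antisym)
  then show ?thesis by (metis prod.collapse)
qed


end

context shm_le begin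
lemma padding_sets:
  assumes inf: "infinite (UNIV::'l set)" and fin: "finite (S::'l set)" "finite T"
  obtains \<tau> \<rho> where "inj_on \<tau> T" "inj_on \<rho> S" "\<tau> ` T \<inter> (S \<union> T) = {}" "\<rho> ` S \<inter> (S \<union> T \<union> \<tau> ` T) = {}"
proof -
  obtain \<tau> where t: "inj_on \<tau> T" "\<tau> ` T \<inter> (S \<union> T) = {}" using fresh_copy[OF inf _ fin(2), of "S \<union> T"] fin by auto
  obtain \<rho> where r: "inj_on \<rho> S" "\<rho> ` S \<inter> (S \<union> T \<union> \<tau> ` T) = {}"
    using fresh_copy[OF inf _ fin(1), of "S \<union> T \<union> \<tau> ` T"] fin by auto
  show ?thesis using that t r by blast
qed

lemma comm_all:
  assumes inf: "infinite (UNIV::'l set)" and fin: "finite S" "finite T" and dj: "S \<inter> T = {}"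
    and y: "y \<in> H S" and z: "z \<in> H T"
  shows "m S T y z = m T S z y"
proof -
  obtain \<tau> \<rho> where t: "inj_on \<tau> T" "\<tau> ` T \<inter> (S \<union> T) = {}" and r: "inj_on \<rho> S" "\<rho> ` S \<inter> (S \<union> T \<union> \<tau> ` T) = {}"
    by (rule padding_sets[OF inf fin])
  define T' where "T' = \<tau> ` T"
  define S' where "S' = \<rho> ` S"
  have f': "finite T'" "finite S'" using fin T'_def S'_def by auto
  have c': "card T' = card T" "card S' = card S" using t r T'_def S'_def by (auto simp: card_image)
  have d: "T' \<inter> S = {}" "T' \<inter> T = {}" "S' \<inter> S = {}" "S' \<inter> T = {}" "S' \<inter> T' = {}"
    using t r T'_def S'_def by auto
  have wT: "rl \<tau> T z \<in> H T'" using rl_closed[OF fin(2) t(1) z] T'_def by simp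
  have wS: "rl \<rho> S y \<in> H S'" using rl_closed[OF fin(1) r(1) y] S'_def by simp
  define A where "A = m S T' y (rl \<tau> T z)"
  define B where "B = m T S' z (rl \<rho> S y)"
  have A: "A \<in> H (S \<union> T')" using m_closed[OF fin(1) f'(1) _ y wT refl] d A_def by auto
  have B: "B \<in> H (T \<union> S')" using m_closed[OF fin(2) f'(2) _ z wS refl] d B_def by auto
  have cardeq: "card (S \<union> T') = card (T \<union> S')"
    using d c' fin f' by (simp add: card_Un_disjoint Int_commute)
  have djPQ: "(S \<union> T') \<inter> (T \<union> S') = {}" using d dj by auto
  have eq: "m (S \<union> T') (T \<union> S') A B = m (T \<union> S') (S \<union> T') B A"
    using comm_eq[OF _ _ djPQ cardeq A B] fin f' by simp
  have dA: "\<Delta> S T' A = (y, rl \<tau> T z)" using Dm[OF fin(1) f'(1) _ y wT] d A_def by auto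
  have dB: "\<Delta> T S' B = (z, rl \<rho> S y)" using Dm[OF fin(2) f'(2) _ z wS] d B_def by auto
  have "\<Delta> (S \<union> T) (T' \<union> S') (m (S \<union> T') (T \<union> S') A B) =
     (m S T (fst (\<Delta> S T' A)) (fst (\<Delta> T S' B)), m T' S' (snd (\<Delta> S T' A)) (snd (\<Delta> T S' B)))"
    by (rule compat) (use fin f' d dj A B in auto)
  then have l: "fst (\<Delta> (S \<union> T) (T' \<union> S') (m (S \<union> T') (T \<union> S') A B)) = m S T y z" using dA dB by simp
  have "\<Delta> (S \<union> T) (T' \<union> S') (m (T \<union> S') (S \<union> T') B A) =
     (m T S (fst (\<Delta> T S' B)) (fst (\<Delta> S T' A)), m S' T' (snd (\<Delta> T S' B)) (snd (\<Delta> S T' A)))"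
    by (rule compat) (use fin f' d dj A B in auto)
  then have r: "fst (\<Delta> (S \<union> T) (T' \<union> S') (m (T \<union> S') (S \<union> T') B A)) = m T S z y" using dA dB by simp
  show ?thesis using l r eq by simp
qed


lemma cocomm_all:
  assumes inf: "infinite (UNIV::'l set)" and fin: "finite S" "finite T" and dj: "S \<inter> T = {}"
    and x: "x \<in> H (S \<union> T)"
  shows "\<Delta> T S x = (snd (\<Delta> S T x), fst (\<Delta> S T x))"
proof -
  obtain \<tau> \<rho> where t: "inj_on \<tau> T" "\<tau> ` T \<inter> (S \<union> T) = {}" and r: "inj_on \<rho> S" "\<rho> ` S \<inter> (S \<union> T \<union> \<tau> ` T) = {}"
    by (rule padding_sets[OF inf fin])
  define T' where "T' = \<tau> ` T"
  define S' where "S' = \<rho> ` S"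
  have f': "finite T'" "finite S'" using fin T'_def S'_def by auto
  have c': "card T' = card T" "card S' = card S" using t r T'_def S'_def by (auto simp: card_image)
  have d: "T' \<inter> S = {}" "T' \<inter> T = {}" "S' \<inter> S = {}" "S' \<inter> T = {}" "S' \<inter> T' = {}"
    using t r T'_def S'_def by auto
  have dj2: "T \<inter> S = {}" using dj by auto
  have TS: "T \<union> S = S \<union> T" by auto
  have yz: "fst (\<Delta> S T x) \<in> H S" "snd (\<Delta> S T x) \<in> H T" using D_closed[OF fin dj x refl] by auto
  have yz2: "fst (\<Delta> T S x) \<in> H T" "snd (\<Delta> T S x) \<in> H S" using D_closed[OF fin(2) fin(1) dj2 x TS[symmetric]] by auto
  have wT: "rl \<tau> T (snd (\<Delta> S T x)) \<in> H T'" using rl_closed[OF fin(2) t(1) yz(2)] T'_def by simp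
  have wS: "rl \<rho> S (fst (\<Delta> S T x)) \<in> H S'" using rl_closed[OF fin(1) r(1) yz(1)] S'_def by simp
  define w where "w = m T' S' (rl \<tau> T (snd (\<Delta> S T x))) (rl \<rho> S (fst (\<Delta> S T x)))"
  have dTS': "T' \<inter> S' = {}" using d by auto
  have w: "w \<in> H (T' \<union> S')" using m_closed[OF f'(1) f'(2) dTS' wT wS refl] w_def by simp
  have w1: "fst (\<Delta> T' S' w) \<in> H T'" "snd (\<Delta> T' S' w) \<in> H S'" using D_closed[OF f'(1) f'(2) dTS' w refl] by auto
  have w2: "fst (\<Delta> S' T' w) \<in> H S'" "snd (\<Delta> S' T' w) \<in> H T'" using D_closed[OF f'(2) f'(1) d(5) w] by (auto simp: Un_commute)
  define X where "X = m (S \<union> T) (T' \<union> S') x w"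
  have djX: "(S \<union> T) \<inter> (T' \<union> S') = {}" using d dj by auto
  have X: "X \<in> H ((S \<union> T') \<union> (T \<union> S'))" using m_closed[OF _ _ djX x w, of "(S \<union> T') \<union> (T \<union> S')"] fin f' X_def by (simp add: Un_ac)
  have cardeq: "card (S \<union> T') = card (T \<union> S')"
    using d c' fin f' by (simp add: card_Un_disjoint Int_commute)
  have djPQ: "(S \<union> T') \<inter> (T \<union> S') = {}" using d dj by auto
  have ce: "\<Delta> (T \<union> S') (S \<union> T') X = (snd (\<Delta> (S \<union> T') (T \<union> S') X), fst (\<Delta> (S \<union> T') (T \<union> S') X))"
    using cocomm_eq[OF _ _ djPQ cardeq X] fin f' by simp
  have e1: "\<Delta> (S \<union> T') (T \<union> S') X = (m S T' (fst (\<Delta> S T x)) (fst (\<Delta> T' S' w)), m T S' (snd (\<Delta> S T x)) (snd (\<Delta> T' S' w)))"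
    unfolding X_def by (rule compat) (use fin f' d dj x w in auto)
  have e2: "\<Delta> (T \<union> S') (S \<union> T') X = (m T S' (fst (\<Delta> T S x)) (fst (\<Delta> S' T' w)), m S T' (snd (\<Delta> T S x)) (snd (\<Delta> S' T' w)))"
    unfolding X_def by (rule compat) (use fin f' d dj x w in auto)
  have dST': "S \<inter> T' = {}" "T \<inter> S' = {}" using d by auto
  have "m S T' (snd (\<Delta> T S x)) (snd (\<Delta> S' T' w)) = m S T' (fst (\<Delta> S T x)) (fst (\<Delta> T' S' w))"
    using ce e1 e2 by simp
  then have "\<Delta> S T' (m S T' (snd (\<Delta> T S x)) (snd (\<Delta> S' T' w))) = \<Delta> S T' (m S T' (fst (\<Delta> S T x)) (fst (\<Delta> T' S' w)))"
    by simp
  then have a: "snd (\<Delta> T S x) = fst (\<Delta> S T x)"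
    using Dm[OF fin(1) f'(1) dST'(1) yz2(2) w2(2)] Dm[OF fin(1) f'(1) dST'(1) yz(1) w1(1)] by simp
  have "m T S' (fst (\<Delta> T S x)) (fst (\<Delta> S' T' w)) = m T S' (snd (\<Delta> S T x)) (snd (\<Delta> T' S' w))"
    using ce e1 e2 by simp
  then have "\<Delta> T S' (m T S' (fst (\<Delta> T S x)) (fst (\<Delta> S' T' w))) = \<Delta> T S' (m T S' (snd (\<Delta> S T x)) (snd (\<Delta> T' S' w)))"
    by simp
  then have b: "fst (\<Delta> T S x) = snd (\<Delta> S T x)"
    using Dm[OF fin(2) f'(2) dST'(2) yz2(1) w2(1)] Dm[OF fin(2) f'(2) dST'(2) yz(2) w1(2)] by simp
  show ?thesis using a b by (metis prod.collapse)
qed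

end


locale shm_cc = shm H rl e m \<Delta>
  for H :: "'l set \<Rightarrow> 'a set"
    and rl :: "('l \<Rightarrow> 'l) \<Rightarrow> 'l set \<Rightarrow> 'a \<Rightarrow> 'a"
    and e :: 'a
    and m :: "'l set \<Rightarrow> 'l set \<Rightarrow> 'a \<Rightarrow> 'a \<Rightarrow> 'a"
    and \<Delta> :: "'l set \<Rightarrow> 'l set \<Rightarrow> 'a \<Rightarrow> 'a \<times> 'a" +
  assumes comm: "hopf_commutative H m" and cocomm: "hopf_cocommutative H \<Delta>"
begin

lemma m_comm: "finite S \<Longrightarrow> finite T \<Longrightarrow> S \<inter> T = {} \<Longrightarrow> x \<in> H S \<Longrightarrow> y \<in> H T \<Longrightarrow> m S T x y = m T S y x"
  using comm[unfolded hopf_commutative_def, rule_format, of S T x y] by simp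

lemma D_swap: "finite S \<Longrightarrow> finite T \<Longrightarrow> S \<inter> T = {} \<Longrightarrow> x \<in> H U \<Longrightarrow> U = S \<union> T
   \<Longrightarrow> \<Delta> T S x = (snd (\<Delta> S T x), fst (\<Delta> S T x))"
proof -
  assume a: "finite S" "finite T" "S \<inter> T = {}" "x \<in> H U" "U = S \<union> T"
  have "\<Delta> S T x = (fst (\<Delta> S T x), snd (\<Delta> S T x))" by simp
  then show ?thesis using cocomm[unfolded hopf_cocommutative_def, rule_format, of S T x "fst (\<Delta> S T x)" "snd (\<Delta> S T x)"] a by simp
qed

definition rs :: "'l set \<Rightarrow> 'l set \<Rightarrow> 'a \<Rightarrow> 'a" where
  "rs I U x = fst (\<Delta> U (I - U) x)"

definition prj :: "'l set \<Rightarrow> 'l set \<Rightarrow> 'a \<Rightarrow> 'a" where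
  "prj S T x = m S T (fst (\<Delta> S T x)) (snd (\<Delta> S T x))"

lemma rs_closed: "finite I \<Longrightarrow> U \<subseteq> I \<Longrightarrow> u \<in> H I \<Longrightarrow> rs I U u \<in> H U"
  unfolding rs_def using D_closed[of U "I - U" u I] by (auto intro: finite_subset)

lemma Res: "finite I \<Longrightarrow> S \<inter> T = {} \<Longrightarrow> S \<union> T = I \<Longrightarrow> u \<in> H I \<Longrightarrow> \<Delta> S T u = (rs I S u, rs I T u)"
proof -
  assume a: "finite I" "S \<inter> T = {}" "S \<union> T = I" "u \<in> H I"
  have T: "T = I - S" "S = I - T" using a by auto
  have f: "finite S" "finite T" using a by auto
  have "\<Delta> T S u = (snd (\<Delta> S T u), fst (\<Delta> S T u))" using D_swap[OF f a(2) a(4)] a by simp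
  then have "snd (\<Delta> S T u) = rs I T u" unfolding rs_def using T by (metis fst_conv)
  moreover have "fst (\<Delta> S T u) = rs I S u" unfolding rs_def using T by simp
  ultimately show ?thesis by (metis prod.collapse)
qed

lemma ResRes: "finite I \<Longrightarrow> U \<subseteq> V \<Longrightarrow> V \<subseteq> I \<Longrightarrow> u \<in> H I \<Longrightarrow> rs V U (rs I V u) = rs I U u"
  unfolding rs_def
  by (rule D_coassoc1[of U "V - U" "I - V" u I]) (auto intro: finite_subset)

lemma RR: "finite I \<Longrightarrow> u \<in> H I \<Longrightarrow> V \<subseteq> I \<Longrightarrow> P \<inter> Q = {} \<Longrightarrow> P \<union> Q = V
  \<Longrightarrow> \<Delta> P Q (rs I V u) = (rs I P u, rs I Q u)"
proof -
  assume a: "finite I" "u \<in> H I" "V \<subseteq> I" "P \<inter> Q = {}" "P \<union> Q = V"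
  have fV: "finite V" using finite_subset[OF a(3) a(1)] .
  have "\<Delta> P Q (rs I V u) = (rs V P (rs I V u), rs V Q (rs I V u))"
    using Res[OF fV a(4) a(5) rs_closed[OF a(1) a(3) a(2)]] .
  also have "\<dots> = (rs I P u, rs I Q u)" using ResRes[OF a(1) _ a(3) a(2), of P] ResRes[OF a(1) _ a(3) a(2), of Q] a(5) by auto
  finally show ?thesis .
qed

lemma prj_res: "finite I \<Longrightarrow> A \<inter> B = {} \<Longrightarrow> A \<union> B = I \<Longrightarrow> u \<in> H I \<Longrightarrow> prj A B u = m A B (rs I A u) (rs I B u)"
  unfolding prj_def using Res[of I A B u] by simp

lemma prj_closed: "finite I \<Longrightarrow> A \<inter> B = {} \<Longrightarrow> A \<union> B = I \<Longrightarrow> u \<in> H I \<Longrightarrow> prj A B u \<in> H I"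
proof -
  assume a: "finite I" "A \<inter> B = {}" "A \<union> B = I" "u \<in> H I"
  have f: "finite A" "finite B" using a by auto
  have c: "fst (\<Delta> A B u) \<in> H A" "snd (\<Delta> A B u) \<in> H B" using D_closed[OF f a(2) a(4)] a by auto
  show ?thesis unfolding prj_def using m_closed[OF f a(2) c] a by simp
qed

lemma prj_idem: "finite I \<Longrightarrow> A \<inter> B = {} \<Longrightarrow> A \<union> B = I \<Longrightarrow> u \<in> H I \<Longrightarrow> prj A B (prj A B u) = prj A B u"
proof -
  assume a: "finite I" "A \<inter> B = {}" "A \<union> B = I" "u \<in> H I"
  have f: "finite A" "finite B" using a by auto
  have c: "fst (\<Delta> A B u) \<in> H A" "snd (\<Delta> A B u) \<in> H B" using D_closed[OF f a(2) a(4)] a by auto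
  show ?thesis unfolding prj_def[of A B u] unfolding prj_def using Dm[OF f a(2) c] by simp
qed

lemma interchange:
  assumes f: "finite P" "finite Q" "finite R" "finite U"
    and d: "P \<inter> Q = {}" "P \<inter> R = {}" "P \<inter> U = {}" "Q \<inter> R = {}" "Q \<inter> U = {}" "R \<inter> U = {}"
    and el: "a \<in> H P" "b \<in> H Q" "c \<in> H R" "d \<in> H U"
    and u: "PQ = P \<union> Q" "RU = R \<union> U" "PR = P \<union> R" "QU = Q \<union> U"
  shows "m PQ RU (m P Q a b) (m R U c d) = m PR QU (m P R a c) (m Q U b d)"
proof -
  have mRU: "m R U c d \<in> H RU" using m_closed[OF f(3) f(4) d(6) el(3) el(4) u(2)] .
  have mQU: "m Q U b d \<in> H QU" using m_closed[OF f(2) f(4) d(5) el(2) el(4) u(4)] .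
  have fRU: "finite RU" "finite QU" using f u by auto
  have d1: "P \<inter> RU = {}" "Q \<inter> RU = {}" "P \<inter> QU = {}" "R \<inter> QU = {}" "R \<inter> Q = {}"
    using d u by auto
  have "m PQ RU (m P Q a b) (m R U c d) = m P (Q \<union> RU) a (m Q RU b (m R U c d))"
    using m_assoc[OF f(1) f(2) fRU(1) d(1) d1(1) d1(2) el(1) el(2) mRU u(1) refl] .
  also have "m Q RU b (m R U c d) = m (Q \<union> R) U (m Q R b c) d"
    using m_assoc[OF f(2) f(3) f(4) d(4) d(5) d(6) el(2) el(3) el(4) refl u(2)] by simp
  also have "m Q R b c = m R Q c b" using m_comm[OF f(2) f(3) d(4) el(2) el(3)] .
  also have "m (Q \<union> R) U (m R Q c b) d = m R QU c (m Q U b d)"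
    using m_assoc[OF f(3) f(2) f(4) d1(5) d(6) d(5) el(3) el(2) el(4) _ u(4), of "Q \<union> R"] by (simp add: Un_commute)
  also have "Q \<union> RU = R \<union> QU" using u by auto
  also have "m P (R \<union> QU) a (m R QU c (m Q U b d)) = m PR QU (m P R a c) (m Q U b d)"
    using m_assoc[OF f(1) f(3) fRU(2) d(2) d1(3) d1(4) el(1) el(3) mQU u(3) refl] by simp
  finally show ?thesis .
qed


lemma prj_prj:
  assumes fI: "finite I" and u: "u \<in> H I" and ab: "A \<inter> B = {}" "A \<union> B = I" and cd: "C \<inter> D = {}" "C \<union> D = I"
  shows "prj A B (prj C D u) = m A B (m (A \<inter> C) (A \<inter> D) (rs I (A \<inter> C) u) (rs I (A \<inter> D) u))
                                     (m (B \<inter> C) (B \<inter> D) (rs I (B \<inter> C) u) (rs I (B \<inter> D) u))"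
proof -
  have fC: "finite C" "finite D" using fI cd by auto
  have CI: "C \<subseteq> I" "D \<subseteq> I" using cd by auto
  have rC: "rs I C u \<in> H C" "rs I D u \<in> H D" using rs_closed[OF fI CI(1) u] rs_closed[OF fI CI(2) u] by auto
  have pcd: "prj C D u = m C D (rs I C u) (rs I D u)" using prj_res[OF fI cd u] .
  have "\<Delta> A B (m C D (rs I C u) (rs I D u)) =
     (m (A \<inter> C) (A \<inter> D) (fst (\<Delta> (A \<inter> C) (B \<inter> C) (rs I C u))) (fst (\<Delta> (A \<inter> D) (B \<inter> D) (rs I D u))),
      m (B \<inter> C) (B \<inter> D) (snd (\<Delta> (A \<inter> C) (B \<inter> C) (rs I C u))) (snd (\<Delta> (A \<inter> D) (B \<inter> D) (rs I D u))))"
    by (rule compat) (use fC cd ab rC in auto)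
  moreover have "\<Delta> (A \<inter> C) (B \<inter> C) (rs I C u) = (rs I (A \<inter> C) u, rs I (B \<inter> C) u)"
    by (rule RR[OF fI u CI(1)]) (use ab CI in auto)
  moreover have "\<Delta> (A \<inter> D) (B \<inter> D) (rs I D u) = (rs I (A \<inter> D) u, rs I (B \<inter> D) u)"
    by (rule RR[OF fI u CI(2)]) (use ab CI in auto)
  ultimately show ?thesis unfolding pcd prj_def[of A B] by simp
qed

lemma prj_comm:
  assumes fI: "finite I" and u: "u \<in> H I" and ab: "A \<inter> B = {}" "A \<union> B = I" and cd: "C \<inter> D = {}" "C \<union> D = I"
  shows "prj A B (prj C D u) = prj C D (prj A B u)"
proof -
  have i: "C \<inter> A = A \<inter> C" "C \<inter> B = B \<inter> C" "D \<inter> A = A \<inter> D" "D \<inter> B = B \<inter> D" by auto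
  have f: "finite (A \<inter> C)" "finite (A \<inter> D)" "finite (B \<inter> C)" "finite (B \<inter> D)" using fI ab by auto
  have sub: "A \<inter> C \<subseteq> I" "A \<inter> D \<subseteq> I" "B \<inter> C \<subseteq> I" "B \<inter> D \<subseteq> I" using ab by auto
  have "prj C D (prj A B u) = m C D (m (A \<inter> C) (B \<inter> C) (rs I (A \<inter> C) u) (rs I (B \<inter> C) u))
                                     (m (A \<inter> D) (B \<inter> D) (rs I (A \<inter> D) u) (rs I (B \<inter> D) u))"
    using prj_prj[OF fI u cd ab] unfolding i .
  also have "\<dots> = m A B (m (A \<inter> C) (A \<inter> D) (rs I (A \<inter> C) u) (rs I (A \<inter> D) u))
                                     (m (B \<inter> C) (B \<inter> D) (rs I (B \<inter> C) u) (rs I (B \<inter> D) u))"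
    by (rule interchange[symmetric, OF f _ _ _ _ _ _ rs_closed[OF fI sub(1) u] rs_closed[OF fI sub(2) u]
          rs_closed[OF fI sub(3) u] rs_closed[OF fI sub(4) u]]) (use ab cd in auto)
  also have "\<dots> = prj A B (prj C D u)" using prj_prj[OF fI u ab cd] by simp
  finally show ?thesis by simp
qed

definition dstep :: "'l set \<Rightarrow> 'a \<Rightarrow> 'a \<Rightarrow> bool" where
  "dstep I u v \<longleftrightarrow> u \<in> H I \<and> (\<exists>A B. A \<inter> B = {} \<and> A \<union> B = I \<and> v = prj A B u)"

definition fx :: "'l set \<Rightarrow> 'a \<Rightarrow> ('l set \<times> 'l set) set" where
  "fx I u = {(A, B). A \<inter> B = {} \<and> A \<union> B = I \<and> prj A B u = u}"

lemma dstep_closed: "dstep I u v \<Longrightarrow> finite I \<Longrightarrow> v \<in> H I"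
proof -
  assume a: "dstep I u v" "finite I"
  obtain A B where ab: "A \<inter> B = {}" "A \<union> B = I" "v = prj A B u" and u: "u \<in> H I"
    using a(1) unfolding dstep_def by blast
  show ?thesis using prj_closed[OF a(2) ab(1) ab(2) u] ab(3) by simp
qed

lemma star_closed: "(dstep I)\<^sup>*\<^sup>* u v \<Longrightarrow> finite I \<Longrightarrow> u \<in> H I \<Longrightarrow> v \<in> H I"
proof (induction rule: rtranclp_induct)
  case base then show ?case by simp
next
  case (step y z) then show ?case using dstep_closed[OF step.hyps(2) step.prems(1)] by simp
qed

lemma F1: "finite I \<Longrightarrow> dstep I u v \<Longrightarrow> p \<in> fx I u \<Longrightarrow> p \<in> fx I v"
proof -
  assume a: "finite I" "dstep I u v" "p \<in> fx I u"
  obtain S T where p: "p = (S, T)" by (cases p)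
  have st: "S \<inter> T = {}" "S \<union> T = I" "prj S T u = u" using a(3) p unfolding fx_def by auto
  obtain A B where ab: "A \<inter> B = {}" "A \<union> B = I" "v = prj A B u" and u: "u \<in> H I"
    using a(2) unfolding dstep_def by blast
  have "prj S T v = prj A B (prj S T u)" using prj_comm[OF a(1) u st(1) st(2) ab(1) ab(2)] ab(3) by simp
  then have "prj S T v = v" using st(3) ab(3) by simp
  then show ?thesis using p st unfolding fx_def by simp
qed

lemma F1s: "(dstep I)\<^sup>*\<^sup>* u v \<Longrightarrow> finite I \<Longrightarrow> fx I u \<subseteq> fx I v"
proof (induction rule: rtranclp_induct)
  case base then show ?case by simp
next
  case (step y z) then show ?case using F1[OF step.prems(1) step.hyps(2)] by blast
qed

lemma F2: "(dstep I)\<^sup>*\<^sup>* u v \<Longrightarrow> finite I \<Longrightarrow> u \<in> H I \<Longrightarrow> fx I v \<subseteq> fx I u \<Longrightarrow> u = v"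
proof (induction rule: rtranclp_induct)
  case base
  then show ?case by simp
next
  case (step y z)
  have "fx I y \<subseteq> fx I z" using F1[OF step.prems(1) step.hyps(2)] by blast
  then have uy: "u = y" using step.IH step.prems by blast
  obtain A B where ab: "A \<inter> B = {}" "A \<union> B = I" "z = prj A B y" and y: "y \<in> H I"
    using step.hyps(2) unfolding dstep_def by blast
  have "prj A B z = z" using prj_idem[OF step.prems(1) ab(1) ab(2) y] ab(3) by simp
  then have "(A, B) \<in> fx I z" using ab unfolding fx_def by simp
  then have "(A, B) \<in> fx I u" using step.prems(3) by blast
  then have "prj A B u = u" unfolding fx_def by simp
  then show ?case using uy ab(3) by simp
qed

lemma star_antisym: "finite I \<Longrightarrow> x \<in> H I \<Longrightarrow> y \<in> H I \<Longrightarrow> (dstep I)\<^sup>*\<^sup>* y x \<Longrightarrow> (dstep I)\<^sup>*\<^sup>* x y \<Longrightarrow> x = y"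
proof -
  assume a: "finite I" "x \<in> H I" "y \<in> H I" "(dstep I)\<^sup>*\<^sup>* y x" "(dstep I)\<^sup>*\<^sup>* x y"
  have "fx I x \<subseteq> fx I y" using F1s[OF a(5) a(1)] .
  then have "y = x" using F2[OF a(4) a(1) a(3)] by blast
  then show ?thesis by simp
qed


lemma rl_step: "dstep I u v \<Longrightarrow> finite I \<Longrightarrow> inj_on \<sigma> I \<Longrightarrow> dstep (\<sigma> ` I) (rl \<sigma> I u) (rl \<sigma> I v)"
proof -
  assume a: "dstep I u v" "finite I" "inj_on \<sigma> I"
  obtain A B where ab: "A \<inter> B = {}" "A \<union> B = I" "v = prj A B u" and u: "u \<in> H I"
    using a(1) unfolding dstep_def by blast
  have f: "finite A" "finite B" using a(2) ab by auto
  have I: "I = A \<union> B" using ab by simp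
  have c: "fst (\<Delta> A B u) \<in> H A" "snd (\<Delta> A B u) \<in> H B" using D_closed[OF f ab(1) u I] by auto
  have "rl \<sigma> I v = m (\<sigma> ` A) (\<sigma> ` B) (rl \<sigma> A (fst (\<Delta> A B u))) (rl \<sigma> B (snd (\<Delta> A B u)))"
    unfolding ab(3) prj_def using m_nat[OF f ab(1) a(3) I c] .
  moreover have "\<Delta> (\<sigma> ` A) (\<sigma> ` B) (rl \<sigma> I u) = map_prod (rl \<sigma> A) (rl \<sigma> B) (\<Delta> A B u)"
    using D_nat[OF f ab(1) a(3) I u] .
  ultimately have "rl \<sigma> I v = prj (\<sigma> ` A) (\<sigma> ` B) (rl \<sigma> I u)" unfolding prj_def by simp
  moreover have "rl \<sigma> I u \<in> H (\<sigma> ` I)" using rl_closed[OF a(2) a(3) u refl] .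
  moreover have "\<sigma> ` A \<inter> \<sigma> ` B = {}"
  proof -
    have "\<sigma> ` (A \<inter> B) = \<sigma> ` A \<inter> \<sigma> ` B" by (rule inj_on_image_Int[OF a(3)]) (use ab in auto)
    then show ?thesis using ab(1) by simp
  qed
  moreover have "\<sigma> ` A \<union> \<sigma> ` B = \<sigma> ` I" using ab(2) by auto
  ultimately show ?thesis unfolding dstep_def by blast
qed

lemma rl_star: "(dstep I)\<^sup>*\<^sup>* u v \<Longrightarrow> finite I \<Longrightarrow> inj_on \<sigma> I \<Longrightarrow> (dstep (\<sigma> ` I))\<^sup>*\<^sup>* (rl \<sigma> I u) (rl \<sigma> I v)"
proof (induction rule: rtranclp_induct)
  case base then show ?case by simp
next
  case (step y z)
  then show ?case using rl_step[OF step.hyps(2) step.prems] by (meson rtranclp.rtrancl_into_rtrancl)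
qed

lemma m_stepL:
  assumes fS: "finite S" and fT: "finite T" and dST: "S \<inter> T = {}" and y: "y \<in> H T" and st: "dstep S x' x"
  shows "dstep (S \<union> T) (m S T x' y) (m S T x y)"
proof -
  obtain A B where ab: "A \<inter> B = {}" "A \<union> B = S" "x = prj A B x'" and x': "x' \<in> H S"
    using st unfolding dstep_def by blast
  have f: "finite A" "finite B" using fS ab by auto
  have S: "S = A \<union> B" using ab by simp
  have c: "fst (\<Delta> A B x') \<in> H A" "snd (\<Delta> A B x') \<in> H B" using D_closed[OF f ab(1) x' S] by auto
  define a where "a = fst (\<Delta> A B x')"
  define b where "b = snd (\<Delta> A B x')"
  have a: "a \<in> H A" and b: "b \<in> H B" using c a_def b_def by auto
  have dAT: "A \<inter> T = {}" "B \<inter> T = {}" using dST S by auto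
  have "\<Delta> (A \<union> T) B (m S T x' y) = (m A T (fst (\<Delta> A B x')) (fst (\<Delta> T {} y)), m B {} (snd (\<Delta> A B x')) (snd (\<Delta> T {} y)))"
    by (rule compat) (use fS fT dST x' y S ab(1) in auto)
  also have "\<dots> = (m A T a y, b)" using D_counitR[OF fT y] m_unitR[OF f(2) b] a_def b_def by simp
  finally have "prj (A \<union> T) B (m S T x' y) = m (A \<union> T) B (m A T a y) b" unfolding prj_def by simp
  moreover have "m S T x y = m (A \<union> T) B (m A T a y) b"
  proof -
    have "m S T x y = m S T (m A B a b) y" using ab(3) unfolding prj_def a_def b_def by simp
    also have "\<dots> = m A (B \<union> T) a (m B T b y)" using m_assoc[OF f fT ab(1) dAT a b y S refl] .
    also have "m B T b y = m T B y b" using m_comm[OF f(2) fT dAT(2) b y] .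
    also have "m A (B \<union> T) a (m T B y b) = m (A \<union> T) B (m A T a y) b"
      using m_assoc[OF f(1) fT f(2) dAT(1) ab(1) _ a y b refl, of "B \<union> T"] dAT by (simp add: Int_commute Un_commute)
    finally show ?thesis .
  qed
  moreover have "m S T x' y \<in> H (S \<union> T)" using m_closed[OF fS fT dST x' y refl] .
  moreover have "(A \<union> T) \<inter> B = {}" "(A \<union> T) \<union> B = S \<union> T" using ab dAT by auto
  ultimately show ?thesis unfolding dstep_def by metis
qed

lemma m_stepR:
  assumes fS: "finite S" and fT: "finite T" and dST: "S \<inter> T = {}" and x: "x \<in> H S" and st: "dstep T y' y"
  shows "dstep (S \<union> T) (m S T x y') (m S T x y)"
proof -
  have y': "y' \<in> H T" using st unfolding dstep_def by blast
  have y: "y \<in> H T" using dstep_closed[OF st fT] .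
  have dTS: "T \<inter> S = {}" using dST by auto
  have "dstep (T \<union> S) (m T S y' x) (m T S y x)" using m_stepL[OF fT fS dTS x st] .
  moreover have "m S T x y' = m T S y' x" using m_comm[OF fS fT dST x y'] .
  moreover have "m S T x y = m T S y x" using m_comm[OF fS fT dST x y] .
  moreover have "T \<union> S = S \<union> T" by auto
  ultimately show ?thesis by simp
qed

lemma m_starL:
  assumes st: "(dstep S)\<^sup>*\<^sup>* x' x" and fS: "finite S" and fT: "finite T" and dST: "S \<inter> T = {}" and y: "y \<in> H T"
  shows "(dstep (S \<union> T))\<^sup>*\<^sup>* (m S T x' y) (m S T x y)"
  using st
proof (induction rule: rtranclp_induct)
  case base then show ?case by simp
next
  case (step u v)
  then show ?case using m_stepL[OF fS fT dST y step.hyps(2)] by (meson rtranclp.rtrancl_into_rtrancl)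
qed

lemma m_starR:
  assumes st: "(dstep T)\<^sup>*\<^sup>* y' y" and fS: "finite S" and fT: "finite T" and dST: "S \<inter> T = {}" and x: "x \<in> H S"
  shows "(dstep (S \<union> T))\<^sup>*\<^sup>* (m S T x y') (m S T x y)"
  using st
proof (induction rule: rtranclp_induct)
  case base then show ?case by simp
next
  case (step u v)
  then show ?case using m_stepR[OF fS fT dST x step.hyps(2)] by (meson rtranclp.rtrancl_into_rtrancl)
qed

lemma D_stepfst:
  assumes fS: "finite S" and fT: "finite T" and dST: "S \<inter> T = {}" and st: "dstep (S \<union> T) x' x"
  shows "dstep S (fst (\<Delta> S T x')) (fst (\<Delta> S T x))"
proof -
  define I where "I = S \<union> T"
  have fI: "finite I" using fS fT I_def by simp
  obtain A B where ab: "A \<inter> B = {}" "A \<union> B = I" "x = prj A B x'" and x': "x' \<in> H I"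
    using st unfolding dstep_def I_def by blast
  have AI: "A \<subseteq> I" "B \<subseteq> I" "S \<subseteq> I" using ab I_def by auto
  have f: "finite A" "finite B" using finite_subset[OF AI(1) fI] finite_subset[OF AI(2) fI] by auto
  have rA: "rs I A x' \<in> H A" "rs I B x' \<in> H B" using rs_closed[OF fI AI(1) x'] rs_closed[OF fI AI(2) x'] by auto
  have x: "x = m A B (rs I A x') (rs I B x')" using prj_res[OF fI ab(1) ab(2) x'] ab(3) by simp
  have "\<Delta> S T (m A B (rs I A x') (rs I B x')) =
     (m (A \<inter> S) (B \<inter> S) (fst (\<Delta> (A \<inter> S) (A \<inter> T) (rs I A x'))) (fst (\<Delta> (B \<inter> S) (B \<inter> T) (rs I B x'))),
      m (A \<inter> T) (B \<inter> T) (snd (\<Delta> (A \<inter> S) (A \<inter> T) (rs I A x'))) (snd (\<Delta> (B \<inter> S) (B \<inter> T) (rs I B x'))))"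
    by (rule compat) (use f ab(1) ab(2) dST rA I_def in auto)
  moreover have "\<Delta> (A \<inter> S) (A \<inter> T) (rs I A x') = (rs I (A \<inter> S) x', rs I (A \<inter> T) x')"
    by (rule RR[OF fI x' AI(1)]) (use dST AI I_def in auto)
  moreover have "\<Delta> (B \<inter> S) (B \<inter> T) (rs I B x') = (rs I (B \<inter> S) x', rs I (B \<inter> T) x')"
    by (rule RR[OF fI x' AI(2)]) (use dST AI I_def in auto)
  ultimately have e1: "fst (\<Delta> S T x) = m (A \<inter> S) (B \<inter> S) (rs I (A \<inter> S) x') (rs I (B \<inter> S) x')"
    using x by simp
  have e2: "fst (\<Delta> S T x') = rs I S x'" using Res[OF fI dST _ x'] I_def by simp
  have "\<Delta> (A \<inter> S) (B \<inter> S) (rs I S x') = (rs I (A \<inter> S) x', rs I (B \<inter> S) x')"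
    by (rule RR[OF fI x' AI(3)]) (use ab I_def in auto)
  then have "prj (A \<inter> S) (B \<inter> S) (fst (\<Delta> S T x')) = fst (\<Delta> S T x)"
    unfolding prj_def e1 e2 by simp
  moreover have "fst (\<Delta> S T x') \<in> H S" using rs_closed[OF fI AI(3) x'] e2 by simp
  moreover have "(A \<inter> S) \<inter> (B \<inter> S) = {}" "(A \<inter> S) \<union> (B \<inter> S) = S" using ab AI by auto
  ultimately show ?thesis unfolding dstep_def by metis
qed

lemma D_stepsnd:
  assumes fS: "finite S" and fT: "finite T" and dST: "S \<inter> T = {}" and st: "dstep (S \<union> T) x' x"
  shows "dstep T (snd (\<Delta> S T x')) (snd (\<Delta> S T x))"
proof -
  have fI: "finite (S \<union> T)" using fS fT by simp
  have x': "x' \<in> H (S \<union> T)" using st unfolding dstep_def by blast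
  have x: "x \<in> H (S \<union> T)" using dstep_closed[OF st fI] .
  have TS: "T \<union> S = S \<union> T" by auto
  have dTS: "T \<inter> S = {}" using dST by auto
  have "dstep (T \<union> S) x' x" using st TS by simp
  from D_stepfst[OF fT fS dTS this] show ?thesis
    using D_swap[OF fS fT dST x' refl] D_swap[OF fS fT dST x refl] by simp
qed

lemma D_star:
  assumes st: "(dstep (S \<union> T))\<^sup>*\<^sup>* x' x" and fS: "finite S" and fT: "finite T" and dST: "S \<inter> T = {}"
  shows "(dstep S)\<^sup>*\<^sup>* (fst (\<Delta> S T x')) (fst (\<Delta> S T x)) \<and> (dstep T)\<^sup>*\<^sup>* (snd (\<Delta> S T x')) (snd (\<Delta> S T x))"
  using st
proof (induction rule: rtranclp_induct)
  case base then show ?case by simp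
next
  case (step u v)
  then show ?case using D_stepfst[OF fS fT dST step.hyps(2)] D_stepsnd[OF fS fT dST step.hyps(2)]
    by (meson rtranclp.rtrancl_into_rtrancl)
qed

definition lel :: "'l set \<Rightarrow> 'a \<Rightarrow> 'a \<Rightarrow> bool" where
  "lel I x y \<longleftrightarrow> (dstep I)\<^sup>*\<^sup>* y x"

lemma self_adj: "self_adjoint H rl m \<Delta>"
  unfolding self_adjoint_def
proof (intro exI[of _ lel] conjI allI impI)
  fix I :: "'l set" assume fI: "finite I"
  show "poset_on (H I) (lel I)"
    unfolding poset_on_def lel_def
    using star_antisym[OF fI] by (meson rtranclp.rtrancl_refl rtranclp_trans)
next
  fix I :: "'l set" and \<sigma> :: "'l \<Rightarrow> 'l" and x x'
  assume a: "finite I \<and> inj_on \<sigma> I \<and> x \<in> H I \<and> x' \<in> H I \<and> lel I x x'"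
  then show "lel (\<sigma> ` I) (rl \<sigma> I x) (rl \<sigma> I x')" unfolding lel_def using rl_star by blast
next
  fix S T x x' y y'
  assume a: "finite S \<and> finite T \<and> S \<inter> T = {} \<and> x \<in> H S \<and> x' \<in> H S \<and> y \<in> H T \<and> y' \<in> H T \<and> lel S x x' \<and> lel T y y'"
  then have fS: "finite S" and fT: "finite T" and d: "S \<inter> T = {}" and el: "x \<in> H S" "x' \<in> H S" "y \<in> H T" "y' \<in> H T"
    and l: "(dstep S)\<^sup>*\<^sup>* x' x" "(dstep T)\<^sup>*\<^sup>* y' y" unfolding lel_def by auto
  have "(dstep (S \<union> T))\<^sup>*\<^sup>* (m S T x' y') (m S T x y')" using m_starL[OF l(1) fS fT d el(4)] .
  moreover have "(dstep (S \<union> T))\<^sup>*\<^sup>* (m S T x y') (m S T x y)" using m_starR[OF l(2) fS fT d el(1)] .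
  ultimately show "lel (S \<union> T) (m S T x y) (m S T x' y')" unfolding lel_def by (rule rtranclp_trans)
next
  fix S T x x'
  assume a: "finite S \<and> finite T \<and> S \<inter> T = {} \<and> x \<in> H (S \<union> T) \<and> x' \<in> H (S \<union> T) \<and> lel (S \<union> T) x x'"
  then have fS: "finite S" and fT: "finite T" and d: "S \<inter> T = {}" and l: "(dstep (S \<union> T))\<^sup>*\<^sup>* x' x"
    unfolding lel_def by auto
  show "prod_le lel S T (\<Delta> S T x) (\<Delta> S T x')" unfolding prod_le_def lel_def using D_star[OF l fS fT d] by simp
next
  fix S T :: "'l set"
  assume a: "finite S \<and> finite T \<and> S \<inter> T = {}"
  then have fS: "finite S" and fT: "finite T" and d: "S \<inter> T = {}" by auto
  have fI: "finite (S \<union> T)" using fS fT by simp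
  have "\<forall>x\<in>H (S \<union> T). \<forall>y\<in>H S. \<forall>z\<in>H T.
              lel (S \<union> T) (m S T y z) x \<longleftrightarrow> prod_le lel S T (y, z) (\<Delta> S T x)"
  proof (intro ballI iffI)
    fix x y z assume x: "x \<in> H (S \<union> T)" and y: "y \<in> H S" and z: "z \<in> H T"
    {
      assume "lel (S \<union> T) (m S T y z) x"
      then have "(dstep (S \<union> T))\<^sup>*\<^sup>* x (m S T y z)" unfolding lel_def .
      from D_star[OF this fS fT d] show "prod_le lel S T (y, z) (\<Delta> S T x)"
        unfolding prod_le_def lel_def using Dm[OF fS fT d y z] by simp
    }
    {
      assume "prod_le lel S T (y, z) (\<Delta> S T x)"
      then have l: "(dstep S)\<^sup>*\<^sup>* (fst (\<Delta> S T x)) y" "(dstep T)\<^sup>*\<^sup>* (snd (\<Delta> S T x)) z"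
        unfolding prod_le_def lel_def by auto
      have c: "fst (\<Delta> S T x) \<in> H S" "snd (\<Delta> S T x) \<in> H T" using D_closed[OF fS fT d x refl] by auto
      have s1: "(dstep (S \<union> T))\<^sup>*\<^sup>* (m S T (fst (\<Delta> S T x)) (snd (\<Delta> S T x))) (m S T y (snd (\<Delta> S T x)))"
        using m_starL[OF l(1) fS fT d c(2)] .
      have s2: "(dstep (S \<union> T))\<^sup>*\<^sup>* (m S T y (snd (\<Delta> S T x))) (m S T y z)"
        using m_starR[OF l(2) fS fT d y] .
      have s0: "dstep (S \<union> T) x (m S T (fst (\<Delta> S T x)) (snd (\<Delta> S T x)))"
        unfolding dstep_def prj_def using x d by blast
      show "lel (S \<union> T) (m S T y z) x" unfolding lel_def
        using s0 s1 s2 by (meson rtranclp.rtrancl_into_rtrancl rtranclp_trans converse_rtranclp_into_rtranclp)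
    }
  qed
  then show "(\<forall>x\<in>H (S \<union> T). \<forall>y\<in>H S. \<forall>z\<in>H T.
              prod_le lel S T (\<Delta> S T x) (y, z) \<longleftrightarrow> lel (S \<union> T) x (m S T y z))
        \<or> (\<forall>x\<in>H (S \<union> T). \<forall>y\<in>H S. \<forall>z\<in>H T.
              lel (S \<union> T) (m S T y z) x \<longleftrightarrow> prod_le lel S T (y, z) (\<Delta> S T x))" by blast
qed

end

theorem mainTheorem11:
  fixes H :: "'l set \<Rightarrow> 'a set"
    and rl :: "('l \<Rightarrow> 'l) \<Rightarrow> 'l set \<Rightarrow> 'a \<Rightarrow> 'a"
    and e :: 'a
    and m :: "'l set \<Rightarrow> 'l set \<Rightarrow> 'a \<Rightarrow> 'a \<Rightarrow> 'a"
    and \<Delta> :: "'l set \<Rightarrow> 'l set \<Rightarrow> 'a \<Rightarrow> 'a \<times> 'a"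
  assumes "infinite (UNIV :: 'l set)"
    and "set_hopf_monoid H rl e m \<Delta>"
  shows "self_adjoint H rl m \<Delta> \<longleftrightarrow> hopf_commutative H m \<and> hopf_cocommutative H \<Delta>"
proof
  assume sa: "self_adjoint H rl m \<Delta>"
  from sa[unfolded self_adjoint_def] obtain le :: "'l set \<Rightarrow> 'a \<Rightarrow> 'a \<Rightarrow> bool" where L:
       "(\<forall>I. finite I \<longrightarrow> poset_on (H I) (le I)) \<and>
       (\<forall>I \<sigma> x x'. finite I \<and> inj_on \<sigma> I \<and> x \<in> H I \<and> x' \<in> H I \<and> le I x x'
          \<longrightarrow> le (\<sigma> ` I) (rl \<sigma> I x) (rl \<sigma> I x')) \<and>
       (\<forall>S T x x' y y'. finite S \<and> finite T \<and> S \<inter> T = {} \<and> x \<in> H S \<and> x' \<in> H S \<and> y \<in> H T \<and> y' \<in> H T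
          \<and> le S x x' \<and> le T y y' \<longrightarrow> le (S \<union> T) (m S T x y) (m S T x' y')) \<and>
       (\<forall>S T x x'. finite S \<and> finite T \<and> S \<inter> T = {} \<and> x \<in> H (S \<union> T) \<and> x' \<in> H (S \<union> T)
          \<and> le (S \<union> T) x x' \<longrightarrow> prod_le le S T (\<Delta> S T x) (\<Delta> S T x')) \<and>
       (\<forall>S T. finite S \<and> finite T \<and> S \<inter> T = {} \<longrightarrow>
          (\<forall>x\<in>H (S \<union> T). \<forall>y\<in>H S. \<forall>z\<in>H T.
              prod_le le S T (\<Delta> S T x) (y, z) \<longleftrightarrow> le (S \<union> T) x (m S T y z))
        \<or> (\<forall>x\<in>H (S \<union> T). \<forall>y\<in>H S. \<forall>z\<in>H T.
              le (S \<union> T) (m S T y z) x \<longleftrightarrow> prod_le le S T (y, z) (\<Delta> S T x)))" ..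
  have po: "\<And>I. finite I \<Longrightarrow> poset_on (H I) (le I)"
    using L[THEN conjunct1] by blast
  have rlmono: "\<And>I \<sigma> x x'. finite I \<Longrightarrow> inj_on \<sigma> I \<Longrightarrow> x \<in> H I \<Longrightarrow> x' \<in> H I \<Longrightarrow> le I x x'
          \<Longrightarrow> le (\<sigma> ` I) (rl \<sigma> I x) (rl \<sigma> I x')"
    using L[THEN conjunct2, THEN conjunct1] by blast
  have mmono: "\<And>S T x x' y y'. finite S \<Longrightarrow> finite T \<Longrightarrow> S \<inter> T = {} \<Longrightarrow> x \<in> H S \<Longrightarrow> x' \<in> H S \<Longrightarrow> y \<in> H T \<Longrightarrow> y' \<in> H T
          \<Longrightarrow> le S x x' \<Longrightarrow> le T y y' \<Longrightarrow> le (S \<union> T) (m S T x y) (m S T x' y')"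
    using L[THEN conjunct2, THEN conjunct2, THEN conjunct1] by blast
  have Dmono: "\<And>S T x x'. finite S \<Longrightarrow> finite T \<Longrightarrow> S \<inter> T = {} \<Longrightarrow> x \<in> H (S \<union> T) \<Longrightarrow> x' \<in> H (S \<union> T)
          \<Longrightarrow> le (S \<union> T) x x' \<Longrightarrow> prod_le le S T (\<Delta> S T x) (\<Delta> S T x')"
    using L[THEN conjunct2, THEN conjunct2, THEN conjunct2, THEN conjunct1] by blast
  have gal: "\<And>S T. finite S \<Longrightarrow> finite T \<Longrightarrow> S \<inter> T = {} \<Longrightarrow>
          (\<forall>x\<in>H (S \<union> T). \<forall>y\<in>H S. \<forall>z\<in>H T.
              prod_le le S T (\<Delta> S T x) (y, z) \<longleftrightarrow> le (S \<union> T) x (m S T y z))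
        \<or> (\<forall>x\<in>H (S \<union> T). \<forall>y\<in>H S. \<forall>z\<in>H T.
              le (S \<union> T) (m S T y z) x \<longleftrightarrow> prod_le le S T (y, z) (\<Delta> S T x))"
    using L[THEN conjunct2, THEN conjunct2, THEN conjunct2, THEN conjunct2] by blast
  interpret SL: shm_le H rl e m \<Delta> le
    by (rule shm_le.intro[OF shm.intro[OF assms(2)] shm_le_axioms.intro[OF po rlmono Dmono gal]])
  have c1: "hopf_commutative H m"
    unfolding hopf_commutative_def
  proof (intro allI impI)
    fix S T x y
    assume a: "finite S \<and> finite T \<and> S \<inter> T = {} \<and> x \<in> H S \<and> y \<in> H T"
    then show "m S T x y = m T S y x" using SL.comm_all[OF assms(1)] by blast
  qed
  have c2: "hopf_cocommutative H \<Delta>"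
    unfolding hopf_cocommutative_def
  proof (intro allI impI)
    fix S T x y z
    assume a: "finite S \<and> finite T \<and> S \<inter> T = {} \<and> x \<in> H (S \<union> T)"
    then have "\<Delta> T S x = (snd (\<Delta> S T x), fst (\<Delta> S T x))" using SL.cocomm_all[OF assms(1)] by blast
    then show "\<Delta> S T x = (y, z) \<longleftrightarrow> \<Delta> T S x = (z, y)" by (cases "\<Delta> S T x") auto
  qed
  show "hopf_commutative H m \<and> hopf_cocommutative H \<Delta>" using c1 c2 by blast
next
  assume cc: "hopf_commutative H m \<and> hopf_cocommutative H \<Delta>"
  interpret SC: shm_cc H rl e m \<Delta>
    by (rule shm_cc.intro[OF shm.intro[OF assms(2)] shm_cc_axioms.intro]) (use cc in auto)
  show "self_adjoint H rl m \<Delta>" by (rule SC.self_adj)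
qed

end
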